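(* Let $\pi_1,\pi_2,\pi_3$ be Borel probability measures on $[0,\infty)$ such that $\mu=\pi_1\times\pi_2\times\pi_3$ satisfies $R\mu=\mu$, where $R(r,s,t)=(t+[r-s]^+,\,t+[s-r]^+,\,r\wedge s)$. (For example, $\pi_1=\pi_2=\mathrm{Geom}(\lambda)$ and $\pi_3=\mathrm{Geom}(\lambda^2)$ with $\lambda\in(0,1)$, where $\mathrm{Geom}(\lambda)$ is the law $k\mapsto(1-\lambda)\lambda^k$ on $\{0,1,2,\dots\}$.) For a finite hexagonal domain $S$, let $P_S$ denote the law of the flow field $(\eta(e))_{e\in\mathbb{E}(\bar S)}$ generated in $S$ as follows: - the inputs on ascending incoming edges are i.i.d. with law $\pi_1$; - the inputs on descending incoming edges are i.i.d. with law $\pi_2$; - the births $(\xi_y)_{y\in S}$ are i.i.d. with law $\pi_3$; - these three families are mutually independent. Then for any two finite hexagonal domains $S'\subseteq S''$, the law under $P_{S''}$ of the restriction $(\eta(e))_{e\in\mathbb{E}(\bar S')}$ equals $P_{S'}$. Consequently there is a unique probability measure $P$ on $[0,\infty)^{\mathbb{E}(\tilde{\mathbb{Z}}^2)}$ whose restriction to $\mathbb{E}(\bar S)$ is $P_S$ for every finite hexagonal domain $S$, and $P$ is invariant under the translations of $\tilde{\mathbb{Z}}^2$.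
   Context: Lattice and edges. $\tilde{\mathbb{Z}}^2=\{(t,x)\in\mathbb{Z}^2:t+x\text{ even}\}$. Two points of $\tilde{\mathbb{Z}}^2$ at Euclidean distance $\sqrt2$ are joined by an edge $\langle y,y'\rangle$; $\mathbb{E}(\tilde{\mathbb{Z}}^2)$ is the set of all such edges. For $y=(t,x)$ write - $e^\nearrow_y=\langle(t,x),(t+1,x+1)\rangle$, - $e^\searrow_y=\langle(t,x),(t+1,x-1)\rangle$, - $e^\swarrow_y=\langle(t-1,x-1),(t,x)\rangle$, - $e^\nwarrow_y=\langle(t-1,x+1),(t,x)\rangle$. Hexagonal domain. A finite hexagonal domain is a set $S=\{(t,x)\in\tilde{\mathbb{Z}}^2: t_0\le t\le t_1,\ x_{t,-}\le x\le x_{t,+}\}$ where: - $t_0<t_1$ are integers; - $x_{t,-}\le x_{t,+}$ ($t_0\le t\le t_1$) are integers with $t+x_{t,\pm}$ even; - there are $t^\pm_{01}\in[t_0,t_1]$ such that $x_{t+1,\pm}-x_{t,\pm}=\pm1$ for $t_0\le t<t^\pm_{01}$, and $x_{t+1,\pm}-x_{t,\pm}=\mp1$ for $t^\pm_{01}\le t<t_1$. Associated sets. $\bar S=S\cup\{y:\langle y,y'\rangle\in\mathbb{E}(\tilde{\mathbb{Z}}^2)\text{ for some }y'\in S\}$, and $\mathbb{E}(\bar S)$ is the set of edges with at least one endpoint in $S$. An incoming edge of $S$ is an edge $\langle y',y\rangle$ with $y\in S$, $y'\notin S$ and $t(y')=t(y)-1$. It is ascending if it equals $e^\swarrow_y$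 and descending if it equals $e^\nwarrow_y$. Generated flow field. Given nonnegative inputs on the incoming edges and nonnegative births $(\xi_y)_{y\in S}$, define $\eta$ on $\mathbb{E}(\bar S)$ recursively in increasing $t$. For $y\in S$, set $\zeta^+_y=\eta(e^\swarrow_y)$ and $\zeta^-_y=\eta(e^\nwarrow_y)$; each of these is either an input or was already defined at an earlier time. Then set $$\eta(e^\nearrow_y)=\xi_y+[\zeta^+_y-\zeta^-_y]^+,\qquad \eta(e^\searrow_y)=\xi_y+[\zeta^-_y-\zeta^+_y]^+.$$ *)

theory Defs
  imports "HOL-Probability.Probability"
begin

type_synonym pt = "int \<times> int"
type_synonym edge = "pt \<times> pt"   \<comment> \<open>edge stored as (lower endpoint, upper endpoint)\<close>

definition Ztil :: "pt set" where
  "Ztil = {(t, x). even (t + x)}"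

definition Edges :: "edge set" where
  "Edges = {((t, x), (t', x')). even (t + x) \<and> t' = t + 1 \<and> (x' = x + 1 \<or> x' = x - 1)}"

definition hexdom :: "pt set \<Rightarrow> bool" where
  "hexdom S \<longleftrightarrow> (\<exists>(t0::int) t1 (xm::int \<Rightarrow> int) (xp::int \<Rightarrow> int) tm tp.
     t0 < t1 \<and> t0 \<le> tm \<and> tm \<le> t1 \<and> t0 \<le> tp \<and> tp \<le> t1 \<and>
     (\<forall>t. t0 \<le> t \<and> t \<le> t1 \<longrightarrow> xm t \<le> xp t \<and> even (t + xm t) \<and> even (t + xp t)) \<and>
     (\<forall>t. t0 \<le> t \<and> t < tp \<longrightarrow> xp (t + 1) - xp t = 1) \<and>
     (\<forall>t. tp \<le> t \<and> t < t1 \<longrightarrow> xp (t + 1) - xp t = -1) \<and>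
     (\<forall>t. t0 \<le> t \<and> t < tm \<longrightarrow> xm (t + 1) - xm t = -1) \<and>
     (\<forall>t. tm \<le> t \<and> t < t1 \<longrightarrow> xm (t + 1) - xm t = 1) \<and>
     S = {(t, x). even (t + x) \<and> t0 \<le> t \<and> t \<le> t1 \<and> xm t \<le> x \<and> x \<le> xp t})"

definition ES :: "pt set \<Rightarrow> edge set" where
  "ES S = {e \<in> Edges. fst e \<in> S \<or> snd e \<in> S}"

definition in_edges :: "pt set \<Rightarrow> edge set" where
  "in_edges S = {e \<in> Edges. snd e \<in> S \<and> fst e \<notin> S}"

definition ascending :: "edge \<Rightarrow> bool" where
  "ascending e \<longleftrightarrow> snd (fst e) = snd (snd e) - 1"

text \<open>Flow field computed with a recursion depth (fuel): at depth n an edge whose lower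
  endpoint lies in S is computed from the two edges entering that endpoint at depth n-1.\<close>
fun flow_f :: "nat \<Rightarrow> pt set \<Rightarrow> (edge \<Rightarrow> real) \<Rightarrow> (pt \<Rightarrow> real) \<Rightarrow> edge \<Rightarrow> real" where
  "flow_f 0 S inp xi e = inp e"
| "flow_f (Suc n) S inp xi ((t, x), (t', x')) =
     (if (t, x) \<in> S then
        (let zp = flow_f n S inp xi ((t - 1, x - 1), (t, x));
             zm = flow_f n S inp xi ((t - 1, x + 1), (t, x))
         in if x' = x + 1 then xi (t, x) + max (zp - zm) 0 else xi (t, x) + max (zm - zp) 0)
      else inp ((t, x), (t', x')))"

text \<open>The generated flow field: enough fuel to reach back below the earliest time of S.\<close>
definition flow :: "pt set \<Rightarrow> (edge \<Rightarrow> real) \<Rightarrow> (pt \<Rightarrow> real) \<Rightarrow> edge \<Rightarrow> real" where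
  "flow S inp xi e = flow_f (nat (fst (fst e) - Min (fst ` S) + 1)) S inp xi e"

definition nnb :: "real measure" where
  "nnb = restrict_space borel {0..}"

definition R3 :: "real \<times> real \<times> real \<Rightarrow> real \<times> real \<times> real" where
  "R3 = (\<lambda>(r, s, t). (t + max (r - s) 0, t + max (s - r) 0, min r s))"

definition noise :: "real measure \<Rightarrow> real measure \<Rightarrow> real measure \<Rightarrow> pt set \<Rightarrow> (edge + pt \<Rightarrow> real) measure" where
  "noise p1 p2 p3 S = PiM (Inl ` in_edges S \<union> Inr ` S)
     (\<lambda>i. case i of Inl e \<Rightarrow> (if ascending e then p1 else p2) | Inr y \<Rightarrow> p3)"

definition PS :: "real measure \<Rightarrow> real measure \<Rightarrow> real measure \<Rightarrow> pt set \<Rightarrow> (edge \<Rightarrow> real) measure" where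
  "PS p1 p2 p3 S = distr (noise p1 p2 p3 S) (PiM (ES S) (\<lambda>_. nnb))
     (\<lambda>\<omega>. \<lambda>e\<in>ES S. flow S (\<lambda>e. \<omega> (Inl e)) (\<lambda>y. \<omega> (Inr y)) e)"

definition shift_edge :: "pt \<Rightarrow> edge \<Rightarrow> edge" where
  "shift_edge a e = ((fst (fst e) + fst a, snd (fst e) + snd a), (fst (snd e) + fst a, snd (snd e) + snd a))"

end

theory Submission
  imports Defs
begin

lemma tent_up:
  fixes f :: "int \<Rightarrow> int"
  assumes A: "\<forall>t. t0 \<le> t \<and> t < p \<longrightarrow> f (t + 1) - f t = 1"
  shows "t0 \<le> t \<Longrightarrow> t \<le> p \<Longrightarrow> f t = f t0 + (t - t0)"
proof (induction t rule: int_ge_induct)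
  case base then show ?case by simp
next
  case (step i)
  have "i < p" using step.prems by simp
  then have "f (i + 1) - f i = 1" using A step.hyps(1) by blast
  moreover have "f i = f t0 + (i - t0)" using step.IH \<open>i < p\<close> by simp
  ultimately show ?case by simp
qed

lemma tent_down:
  fixes f :: "int \<Rightarrow> int"
  assumes A: "\<forall>t. p \<le> t \<and> t < t1 \<longrightarrow> f (t + 1) - f t = -1"
  shows "p \<le> t \<Longrightarrow> t \<le> t1 \<Longrightarrow> f t = f t1 + (t1 - t)"
proof -
  define g where "g s = f (- s)" for s
  have B: "\<forall>s. - t1 \<le> s \<and> s < - p \<longrightarrow> g (s + 1) - g s = 1"
  proof (intro allI impI)
    fix s assume "- t1 \<le> s \<and> s < - p"
    then have h: "p \<le> - s - 1 \<and> - s - 1 < t1" by simp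
    have "f (- s - 1 + 1) - f (- s - 1) = -1" using A h by blast
    moreover have "- s - 1 + 1 = - s" by simp
    moreover have "- (s + 1) = - s - 1" by simp
    ultimately show "g (s + 1) - g s = 1" unfolding g_def by simp
  qed
  assume a: "p \<le> t" "t \<le> t1"
  have "g (- t) = g (- t1) + (- t - - t1)"
    by (rule tent_up[OF B]) (use a in simp_all)
  then show ?thesis unfolding g_def by simp
qed

lemma tent:
  fixes f :: "int \<Rightarrow> int"
  assumes "t0 \<le> p" "p \<le> t1"
    and "\<forall>t. t0 \<le> t \<and> t < p \<longrightarrow> f (t + 1) - f t = 1"
    and "\<forall>t. p \<le> t \<and> t < t1 \<longrightarrow> f (t + 1) - f t = -1"
    and "t0 \<le> t" "t \<le> t1"
  shows "f t = min (f t0 + (t - t0)) (f t1 + (t1 - t))"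
proof -
  have a: "f p = f t0 + (p - t0)" using tent_up[OF assms(3) assms(1) order.refl] .
  have b: "f p = f t1 + (t1 - p)" using tent_down[OF assms(4) order.refl assms(2)] .
  show ?thesis
  proof (cases "t \<le> p")
    case True
    then have c: "f t = f t0 + (t - t0)" using tent_up[OF assms(3) assms(5)] by blast
    have "f t0 + (t - t0) \<le> f t1 + (t1 - t)" using a b True by linarith
    then show ?thesis using c by (simp add: min_def)
  next
    case False
    then have c: "f t = f t1 + (t1 - t)" using tent_down[OF assms(4) _ assms(6)] by simp
    have "\<not> f t0 + (t - t0) \<le> f t1 + (t1 - t) \<or> f t0 + (t - t0) = f t1 + (t1 - t)" using a b False by linarith
    then show ?thesis using c by (auto simp add: min_def)
  qed
qed

definition box :: "int \<Rightarrow> int \<Rightarrow> int \<Rightarrow> int \<Rightarrow> int \<Rightarrow> int \<Rightarrow> pt set" where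
  "box t0 t1 A B C D = {(t, x). even (t + x) \<and> t0 \<le> t \<and> t \<le> t1 \<and> A \<le> t + x \<and> t + x \<le> B \<and> C \<le> t - x \<and> t - x \<le> D}"

lemma hex_box:
  assumes "hexdom S"
  shows "\<exists>t0 t1 A B C D. S = box t0 t1 A B C D"
proof -
  from assms obtain t0 t1 xm xp tm tp where
    h: "t0 < t1" "t0 \<le> tm" "tm \<le> t1" "t0 \<le> tp" "tp \<le> t1"
     "\<forall>t. t0 \<le> t \<and> t < tp \<longrightarrow> xp (t + 1) - xp t = 1"
     "\<forall>t. tp \<le> t \<and> t < t1 \<longrightarrow> xp (t + 1) - xp t = -1"
     "\<forall>t. t0 \<le> t \<and> t < tm \<longrightarrow> xm (t + 1) - xm t = -1"
     "\<forall>t. tm \<le> t \<and> t < t1 \<longrightarrow> xm (t + 1) - xm t = 1"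
     "S = {(t, x). even (t + x) \<and> t0 \<le> t \<and> t \<le> t1 \<and> xm t \<le> x \<and> x \<le> xp t}"
    using assms unfolding hexdom_def by (elim exE conjE) (rule that; assumption)
  have p: "xp t = min (xp t0 + (t - t0)) (xp t1 + (t1 - t))" if "t0 \<le> t" "t \<le> t1" for t
    by (rule tent[of t0 tp t1 xp t]) (use h(4,5,6,7) that in simp_all)
  have m: "- xm t = min (- xm t0 + (t - t0)) (- xm t1 + (t1 - t))" if "t0 \<le> t" "t \<le> t1" for t
  proof (rule tent[of t0 tm t1 "\<lambda>t. - xm t" t])
    show "\<forall>t. t0 \<le> t \<and> t < tm \<longrightarrow> - xm (t + 1) - - xm t = 1" using h(8) by force
    show "\<forall>t. tm \<le> t \<and> t < t1 \<longrightarrow> - xm (t + 1) - - xm t = -1" using h(9) by force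
  qed (use h(2,3) that in simp_all)
  define A where "A = xm t0 + t0"
  define B where "B = xp t1 + t1"
  define C where "C = t0 - xp t0"
  define D where "D = t1 - xm t1"
  have iff: "(even(t+x) \<and> t0 \<le> t \<and> t \<le> t1 \<and> xm t \<le> x \<and> x \<le> xp t) \<longleftrightarrow>
     (even (t + x) \<and> t0 \<le> t \<and> t \<le> t1 \<and> A \<le> t + x \<and> t + x \<le> B \<and> C \<le> t - x \<and> t - x \<le> D)" for t x
  proof (cases "t0 \<le> t \<and> t \<le> t1")
    case True
    have e1: "xm t \<le> x \<longleftrightarrow> A \<le> t + x \<and> t - x \<le> D"
    proof -
      have "xm t \<le> x \<longleftrightarrow> - x \<le> - xm t" by simp
      also have "\<dots> \<longleftrightarrow> - x \<le> - xm t0 + (t - t0) \<and> - x \<le> - xm t1 + (t1 - t)"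
        unfolding m[of t, OF conjunct1[OF True] conjunct2[OF True]] by (rule min.bounded_iff)
      also have "\<dots> \<longleftrightarrow> A \<le> t + x \<and> t - x \<le> D" unfolding A_def D_def by linarith
      finally show ?thesis .
    qed
    have e2: "x \<le> xp t \<longleftrightarrow> t + x \<le> B \<and> C \<le> t - x"
    proof -
      have "x \<le> xp t \<longleftrightarrow> x \<le> xp t0 + (t - t0) \<and> x \<le> xp t1 + (t1 - t)"
        unfolding p[of t, OF conjunct1[OF True] conjunct2[OF True]] by (rule min.bounded_iff)
      also have "\<dots> \<longleftrightarrow> t + x \<le> B \<and> C \<le> t - x" unfolding B_def C_def by linarith
      finally show ?thesis .
    qed
    show ?thesis using e1 e2 by blast
  qed blast
  have "S = box t0 t1 A B C D"
  proof (rule set_eqI)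
    fix z :: pt
    obtain t x where z: "z = (t, x)" by fastforce
    show "z \<in> S \<longleftrightarrow> z \<in> box t0 t1 A B C D"
      unfolding z h(10) box_def using iff[of t x] by simp
  qed
  then show ?thesis by blast
qed

definition cone_le :: "pt \<Rightarrow> pt \<Rightarrow> bool" where
  "cone_le y w \<longleftrightarrow> fst y + snd y \<le> fst w + snd w \<and> fst y - snd y \<le> fst w - snd w"

lemma cone_le_trans: "cone_le a b \<Longrightarrow> cone_le b c \<Longrightarrow> cone_le a c"
  unfolding cone_le_def by linarith

lemma box_convex:
  assumes "z \<in> box t0 t1 A B C D" "w \<in> box t0 t1 A B C D" "y \<in> Ztil" "cone_le z y" "cone_le y w"
  shows "y \<in> box t0 t1 A B C D"
proof -
  obtain a b where y: "y = (a, b)" by fastforce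
  obtain c d where z: "z = (c, d)" by fastforce
  obtain e f where w: "w = (e, f)" by fastforce
  have "even (a + b)" using assms(3) y unfolding Ztil_def by simp
  moreover have "t0 \<le> c \<and> c \<le> t1 \<and> A \<le> c + d \<and> c + d \<le> B \<and> C \<le> c - d \<and> c - d \<le> D"
    using assms(1) z unfolding box_def by simp
  moreover have "t0 \<le> e \<and> e \<le> t1 \<and> A \<le> e + f \<and> e + f \<le> B \<and> C \<le> e - f \<and> e - f \<le> D"
    using assms(2) w unfolding box_def by simp
  moreover have "c + d \<le> a + b \<and> c - d \<le> a - b" using assms(4) y z unfolding cone_le_def by simp
  moreover have "a + b \<le> e + f \<and> a - b \<le> e - f" using assms(5) y w unfolding cone_le_def by simp
  ultimately have "even (a + b) \<and> t0 \<le> a \<and> a \<le> t1 \<and> A \<le> a + b \<and> a + b \<le> B \<and> C \<le> a - b \<and> a - b \<le> D"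
    by linarith
  then show ?thesis unfolding y box_def by simp
qed

lemma hex_convex:
  assumes "hexdom S" "z \<in> S" "w \<in> S" "y \<in> Ztil" "cone_le z y" "cone_le y w"
  shows "y \<in> S"
  using hex_box[OF assms(1)] box_convex assms by blast

lemma box_finite: "finite (box t0 t1 A B C D)"
proof -
  have "box t0 t1 A B C D \<subseteq> {t0..t1} \<times> {A - t1 .. B - t0}"
    unfolding box_def by auto
  then show ?thesis by (rule finite_subset) auto
qed

lemma hex_finite: "hexdom S \<Longrightarrow> finite S"
proof -
  assume "hexdom S"
  then obtain t0 t1 A B C D where "S = box t0 t1 A B C D" using hex_box by blast
  then show ?thesis using box_finite by simp
qed

lemma hex_Ztil: "hexdom S \<Longrightarrow> S \<subseteq> Ztil"
  unfolding hexdom_def Ztil_def by auto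

lemma hex_nonempty: "hexdom S \<Longrightarrow> S \<noteq> {}"
  unfolding hexdom_def by fastforce

definition Dm :: "nat \<Rightarrow> pt set" where
  "Dm m = {(t, x). even (t + x) \<and> \<bar>t\<bar> + \<bar>x\<bar> \<le> 2 * int m + 2}"

lemma hexdom_Dm: "hexdom (Dm m)"
proof -
  define R where "R = 2 * int m + 2"
  have Rp: "R > 0" unfolding R_def by simp
  have eR: "even R" unfolding R_def by simp
  have ev1: "even (t + (R - \<bar>t\<bar>))" for t
  proof (cases "t \<ge> 0")
    case True then have "t + (R - \<bar>t\<bar>) = R" by simp
    then show ?thesis using eR by simp
  next
    case False then have "t + (R - \<bar>t\<bar>) = R + 2 * t" by simp
    then show ?thesis using eR by simp
  qed
  have ev2: "even (t + (\<bar>t\<bar> - R))" for t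
  proof (cases "t \<ge> 0")
    case True then have "t + (\<bar>t\<bar> - R) = 2 * t - R" by simp
    then show ?thesis using eR by simp
  next
    case False then have "t + (\<bar>t\<bar> - R) = - R" by simp
    then show ?thesis using eR by simp
  qed
  have set: "Dm m = {(t, x). even (t + x) \<and> - R \<le> t \<and> t \<le> R \<and> \<bar>t\<bar> - R \<le> x \<and> x \<le> R - \<bar>t\<bar>}"
  proof (rule set_eqI)
    fix z :: pt
    obtain t x where z: "z = (t, x)" by fastforce
    have "(\<bar>t\<bar> + \<bar>x\<bar> \<le> R) \<longleftrightarrow> (- R \<le> t \<and> t \<le> R \<and> \<bar>t\<bar> - R \<le> x \<and> x \<le> R - \<bar>t\<bar>)"
      by (cases "t \<ge> 0"; cases "x \<ge> 0") auto
    then show "z \<in> Dm m \<longleftrightarrow> z \<in> {(t, x). even (t + x) \<and> - R \<le> t \<and> t \<le> R \<and> \<bar>t\<bar> - R \<le> x \<and> x \<le> R - \<bar>t\<bar>}"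
      unfolding z Dm_def R_def by simp
  qed
  have sl1: "\<forall>t. - R \<le> t \<and> t < 0 \<longrightarrow> (R - \<bar>t + 1\<bar>) - (R - \<bar>t\<bar>) = 1" by auto
  have sl2: "\<forall>t. 0 \<le> t \<and> t < R \<longrightarrow> (R - \<bar>t + 1\<bar>) - (R - \<bar>t\<bar>) = -1" by auto
  have sl3: "\<forall>t. - R \<le> t \<and> t < 0 \<longrightarrow> (\<bar>t + 1\<bar> - R) - (\<bar>t\<bar> - R) = -1" by auto
  have sl4: "\<forall>t. 0 \<le> t \<and> t < R \<longrightarrow> (\<bar>t + 1\<bar> - R) - (\<bar>t\<bar> - R) = 1" by auto
  have bd: "\<forall>t. - R \<le> t \<and> t \<le> R \<longrightarrow> \<bar>t\<bar> - R \<le> R - \<bar>t\<bar> \<and> even (t + (\<bar>t\<bar> - R)) \<and> even (t + (R - \<bar>t\<bar>))"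
    using ev1 ev2 by auto
  show ?thesis unfolding hexdom_def
    apply (rule exI[of _ "-R"], rule exI[of _ R], rule exI[of _ "\<lambda>t. \<bar>t\<bar> - R"],
           rule exI[of _ "\<lambda>t. R - \<bar>t\<bar>"], rule exI[of _ 0], rule exI[of _ 0])
    using Rp bd sl1 sl2 sl3 sl4 set by simp
qed

lemma edge_in_ES_Dm:
  assumes "e \<in> Edges" "\<bar>fst (fst e)\<bar> + \<bar>snd (fst e)\<bar> \<le> 2 * int m + 2"
  shows "e \<in> ES (Dm m)"
  using assms unfolding ES_def Edges_def Dm_def by auto

lemma finite_in_ES_Dm:
  assumes "finite J" "J \<subseteq> Edges"
  shows "\<exists>m. J \<subseteq> ES (Dm m)"
proof -
  define M where "M = Max ((\<lambda>e. \<bar>fst (fst e)\<bar> + \<bar>snd (fst e)\<bar>) ` J \<union> {0})"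
  have "\<forall>e\<in>J. \<bar>fst (fst e)\<bar> + \<bar>snd (fst e)\<bar> \<le> M" unfolding M_def using assms(1) by auto
  then have "\<forall>e\<in>J. \<bar>fst (fst e)\<bar> + \<bar>snd (fst e)\<bar> \<le> 2 * int (nat M) + 2" by auto
  then show ?thesis using edge_in_ES_Dm assms(2) by blast
qed

lemma finite_in_Dm:
  assumes "finite S"
  shows "\<exists>m. S \<subseteq> Dm m \<or> \<not> S \<subseteq> Ztil"
proof -
  define M where "M = Max ((\<lambda>y. \<bar>fst y\<bar> + \<bar>snd y\<bar>) ` S \<union> {0})"
  have "\<forall>y\<in>S. \<bar>fst y\<bar> + \<bar>snd y\<bar> \<le> M" unfolding M_def using assms(1) by auto
  then have "\<forall>y\<in>S. \<bar>fst y\<bar> + \<bar>snd y\<bar> \<le> 2 * int (nat M) + 2" by auto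
  then have "S \<subseteq> Ztil \<Longrightarrow> S \<subseteq> Dm (nat M)" unfolding Dm_def Ztil_def by auto
  then show ?thesis by blast
qed

lemma Dm_mono: "m \<le> n \<Longrightarrow> Dm m \<subseteq> Dm n"
  unfolding Dm_def by auto

definition shift_pt :: "pt \<Rightarrow> pt \<Rightarrow> pt" where
  "shift_pt a y = (fst y + fst a, snd y + snd a)"

lemma shift_edge_pt: "shift_edge a e = (shift_pt a (fst e), shift_pt a (snd e))"
  unfolding shift_edge_def shift_pt_def by simp

lemma shift_slope:
  fixes f :: "int \<Rightarrow> int"
  assumes "\<forall>t. a \<le> t \<and> t < b \<longrightarrow> f (t + 1) - f t = c"
  shows "\<forall>t. a + s \<le> t \<and> t < b + s \<longrightarrow> (f (t + 1 - s) + d) - (f (t - s) + d) = c"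
proof (intro allI impI)
  fix t assume "a + s \<le> t \<and> t < b + s"
  then have "a \<le> t - s \<and> t - s < b" by auto
  then have "f (t - s + 1) - f (t - s) = c" using assms by blast
  moreover have "t + 1 - s = t - s + 1" by simp
  ultimately show "(f (t + 1 - s) + d) - (f (t - s) + d) = c" by (metis add_diff_cancel_right)
qed

lemma hexdom_shift:
  assumes "hexdom S" "a \<in> Ztil"
  shows "hexdom (shift_pt a ` S)"
proof -
  obtain a1 a2 where a: "a = (a1, a2)" by fastforce
  have ea: "even (a1 + a2)" using assms(2) a unfolding Ztil_def by auto
  from assms(1) obtain t0 t1 xm xp tm tp where
    h: "t0 < t1" "t0 \<le> tm" "tm \<le> t1" "t0 \<le> tp" "tp \<le> t1"
     "\<forall>t. t0 \<le> t \<and> t \<le> t1 \<longrightarrow> xm t \<le> xp t \<and> even (t + xm t) \<and> even (t + xp t)"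
     "\<forall>t. t0 \<le> t \<and> t < tp \<longrightarrow> xp (t + 1) - xp t = 1"
     "\<forall>t. tp \<le> t \<and> t < t1 \<longrightarrow> xp (t + 1) - xp t = -1"
     "\<forall>t. t0 \<le> t \<and> t < tm \<longrightarrow> xm (t + 1) - xm t = -1"
     "\<forall>t. tm \<le> t \<and> t < t1 \<longrightarrow> xm (t + 1) - xm t = 1"
     "S = {(t, x). even (t + x) \<and> t0 \<le> t \<and> t \<le> t1 \<and> xm t \<le> x \<and> x \<le> xp t}"
    unfolding hexdom_def by blast
  define xm' where "xm' t = xm (t - a1) + a2" for t
  define xp' where "xp' t = xp (t - a1) + a2" for t
  have par: "even (t + (f (t - a1) + a2))" if "even ((t - a1) + f (t - a1))" for t f
  proof -
    have "t + (f (t - a1) + a2) = ((t - a1) + f (t - a1)) + (a1 + a2)" by simp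
    then show ?thesis using that ea by presburger
  qed
  have par2: "even (t + x) \<longleftrightarrow> even ((t - a1) + (x - a2))" for t x
  proof -
    have "t + x = ((t - a1) + (x - a2)) + (a1 + a2)" by simp
    then show ?thesis using ea by presburger
  qed
  have img: "shift_pt a ` S = {(t, x). even (t + x) \<and> t0 + a1 \<le> t \<and> t \<le> t1 + a1 \<and> xm' t \<le> x \<and> x \<le> xp' t}"
  proof (rule set_eqI)
    fix z :: pt
    obtain t x where z: "z = (t, x)" by fastforce
    have "z \<in> shift_pt a ` S \<longleftrightarrow> (t - a1, x - a2) \<in> S"
    proof
      assume "z \<in> shift_pt a ` S"
      then obtain y where "y \<in> S" "z = shift_pt a y" by blast
      then show "(t - a1, x - a2) \<in> S" unfolding z a shift_pt_def by (cases y) auto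
    next
      assume "(t - a1, x - a2) \<in> S"
      moreover have "z = shift_pt a (t - a1, x - a2)" unfolding z a shift_pt_def by simp
      ultimately show "z \<in> shift_pt a ` S" by blast
    qed
    then show "z \<in> shift_pt a ` S \<longleftrightarrow> z \<in> {(t, x). even (t + x) \<and> t0 + a1 \<le> t \<and> t \<le> t1 + a1 \<and> xm' t \<le> x \<and> x \<le> xp' t}"
      unfolding h(11) z xm'_def xp'_def using par2[of t x] by auto
  qed
  show ?thesis unfolding hexdom_def
  proof (intro exI conjI)
    show "t0 + a1 < t1 + a1" "t0 + a1 \<le> tm + a1" "tm + a1 \<le> t1 + a1" "t0 + a1 \<le> tp + a1" "tp + a1 \<le> t1 + a1"
      using h by auto
    show "\<forall>t. t0 + a1 \<le> t \<and> t \<le> t1 + a1 \<longrightarrow> xm' t \<le> xp' t \<and> even (t + xm' t) \<and> even (t + xp' t)"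
    proof (intro allI impI)
      fix t assume "t0 + a1 \<le> t \<and> t \<le> t1 + a1"
      then have "t0 \<le> t - a1 \<and> t - a1 \<le> t1" by auto
      then show "xm' t \<le> xp' t \<and> even (t + xm' t) \<and> even (t + xp' t)"
        using h(6) par[of t xm] par[of t xp] unfolding xm'_def xp'_def by auto
    qed
    show "\<forall>t. t0 + a1 \<le> t \<and> t < tp + a1 \<longrightarrow> xp' (t + 1) - xp' t = 1"
      using shift_slope[OF h(7), of a1 a2] unfolding xp'_def by simp
    show "\<forall>t. tp + a1 \<le> t \<and> t < t1 + a1 \<longrightarrow> xp' (t + 1) - xp' t = -1"
      using shift_slope[OF h(8), of a1 a2] unfolding xp'_def by simp
    show "\<forall>t. t0 + a1 \<le> t \<and> t < tm + a1 \<longrightarrow> xm' (t + 1) - xm' t = -1"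
      using shift_slope[OF h(9), of a1 a2] unfolding xm'_def by simp
    show "\<forall>t. tm + a1 \<le> t \<and> t < t1 + a1 \<longrightarrow> xm' (t + 1) - xm' t = 1"
      using shift_slope[OF h(10), of a1 a2] unfolding xm'_def by simp
  qed (rule img)
qed

definition ea :: "pt \<Rightarrow> edge" where "ea y = ((fst y - 1, snd y - 1), y)"
definition ed :: "pt \<Rightarrow> edge" where "ed y = ((fst y - 1, snd y + 1), y)"

lemma Min_le_t: "(t, x) \<in> S \<Longrightarrow> finite S \<Longrightarrow> Min (fst ` S) \<le> t"
  by (rule Min_le) (auto intro: image_eqI[where x="(t,x)"])

lemma flow_f_fuel:
  assumes S: "finite S" "S \<noteq> {}"
  shows "nat (fst (fst e) - Min (fst ` S) + 1) \<le> n \<Longrightarrow> nat (fst (fst e) - Min (fst ` S) + 1) \<le> k \<Longrightarrow>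
    flow_f n S inp xi e = flow_f k S inp xi e"
proof (induction n arbitrary: e k)
  case 0
  obtain t x t' x' where e: "e = ((t, x), (t', x'))" by (metis prod.collapse)
  have "(t, x) \<notin> S" using 0 S e Min_le_t[of t x S] by auto
  then show ?case using e by (cases k) auto
next
  case (Suc n)
  obtain t x t' x' where e: "e = ((t, x), (t', x'))" by (metis prod.collapse)
  show ?case
  proof (cases "(t, x) \<in> S")
    case False then show ?thesis using e by (cases k) auto
  next
    case True
    then have tm: "Min (fst ` S) \<le> t" using S(1) by (rule Min_le_t)
    then obtain k' where k: "k = Suc k'" using Suc.prems e by (cases k) auto
    have fe: "nat (fst (fst ((t - 1, x'') , (t, x))) - Min (fst ` S) + 1) \<le> n" 
             "nat (fst (fst ((t - 1, x'') , (t, x))) - Min (fst ` S) + 1) \<le> k'" for x''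
      using Suc.prems e k tm by auto
    show ?thesis unfolding e k using True Suc.IH[OF fe] by (simp add: Let_def)
  qed
qed

lemma flow_eqn:
  assumes S: "finite S" "S \<noteq> {}"
  shows "flow S inp xi ((t, x), (t', x')) =
    (if (t, x) \<in> S then
       (if x' = x + 1 then xi (t, x) + max (flow S inp xi (ea (t, x)) - flow S inp xi (ed (t, x))) 0
        else xi (t, x) + max (flow S inp xi (ed (t, x)) - flow S inp xi (ea (t, x))) 0)
     else inp ((t, x), (t', x')))"
proof (cases "(t, x) \<in> S")
  case True
  then have tm: "Min (fst ` S) \<le> t" using S(1) by (rule Min_le_t)
  then have n: "nat (t - Min (fst ` S) + 1) = Suc (nat (t - Min (fst ` S)))" by simp
  have r: "flow_f (nat (t - Min (fst ` S))) S inp xi ((t - 1, x''), (t, x)) = flow S inp xi ((t - 1, x''), (t, x))" for x''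
    unfolding flow_def by (rule flow_f_fuel[OF S]) auto
  have lhs: "flow S inp xi ((t, x), (t', x')) = flow_f (Suc (nat (t - Min (fst ` S)))) S inp xi ((t, x), (t', x'))"
    unfolding flow_def using n by simp
  show ?thesis unfolding lhs ea_def ed_def using True
    by (simp only: flow_f.simps Let_def r if_True fst_conv snd_conv)
next
  case False
  then show ?thesis unfolding flow_def
    by (cases "nat (t - Min (fst ` S) + 1)") auto
qed

lemma ea_ES: "y \<in> S \<Longrightarrow> S \<subseteq> Ztil \<Longrightarrow> ea y \<in> ES S"
  unfolding ea_def ES_def Edges_def Ztil_def by (cases y) auto

lemma ed_ES: "y \<in> S \<Longrightarrow> S \<subseteq> Ztil \<Longrightarrow> ed y \<in> ES S"
  unfolding ed_def ES_def Edges_def Ztil_def by (cases y) auto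

lemma flow_induct:
  assumes S: "finite S" "S \<noteq> {}" "S \<subseteq> Ztil"
  assumes step: "\<And>t x t' x'. ((t, x), (t', x')) \<in> ES S \<Longrightarrow>
     ((t, x) \<in> S \<Longrightarrow> P (ea (t, x)) \<and> P (ed (t, x))) \<Longrightarrow> P ((t, x), (t', x'))"
  shows "e \<in> ES S \<Longrightarrow> P e"
proof (induction "nat (fst (fst e) - Min (fst ` S) + 1)" arbitrary: e rule: less_induct)
  case less
  obtain t x t' x' where e: "e = ((t, x), (t', x'))" by (metis prod.collapse)
  show ?case unfolding e
  proof (rule step)
    show "((t, x), t', x') \<in> ES S" using less e by simp
    assume tS: "(t, x) \<in> S"
    then have tm: "Min (fst ` S) \<le> t" using S(1) by (rule Min_le_t)
    show "P (ea (t, x)) \<and> P (ed (t, x))"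
    proof
      show "P (ea (t, x))" using less(1)[of "ea (t, x)"] ea_ES[OF tS S(3)] tm e by (auto simp: ea_def)
      show "P (ed (t, x))" using less(1)[of "ed (t, x)"] ed_ES[OF tS S(3)] tm e by (auto simp: ed_def)
    qed
  qed
qed

lemma ES_not_in: "e \<in> ES S \<Longrightarrow> fst e \<notin> S \<Longrightarrow> e \<in> in_edges S"
  unfolding ES_def in_edges_def by auto

lemma flow_cong:
  assumes S: "finite S" "S \<noteq> {}" "S \<subseteq> Ztil"
  assumes inp: "\<And>e. e \<in> in_edges S \<Longrightarrow> inp e = inp' e" and xi: "\<And>y. y \<in> S \<Longrightarrow> xi y = xi' y"
  assumes e: "e \<in> ES S"
  shows "flow S inp xi e = flow S inp' xi' e"
proof -
  have step: "flow S inp xi ((t, x), (t', x')) = flow S inp' xi' ((t, x), (t', x'))"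
    if 1: "((t, x), (t', x')) \<in> ES S"
      "(t, x) \<in> S \<Longrightarrow> flow S inp xi (ea (t, x)) = flow S inp' xi' (ea (t, x)) \<and> flow S inp xi (ed (t, x)) = flow S inp' xi' (ed (t, x))"
    for t x t' x'
  proof (cases "(t, x) \<in> S")
    case True then show ?thesis
      unfolding flow_eqn[OF S(1,2), of inp xi t x t' x'] flow_eqn[OF S(1,2), of inp' xi' t x t' x']
      using 1(2)[OF True] xi[OF True] by simp
  next
    case False then show ?thesis
      unfolding flow_eqn[OF S(1,2), of inp xi t x t' x'] flow_eqn[OF S(1,2), of inp' xi' t x t' x']
      using inp[OF ES_not_in[OF 1(1)]] by simp
  qed
  show ?thesis
    apply (rule flow_induct[OF S, where P="\<lambda>e. flow S inp xi e = flow S inp' xi' e", OF _ e])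
    apply (rule step)
     apply assumption
    apply assumption
    done
qed

lemma flow_nonneg:
  assumes S: "finite S" "S \<noteq> {}" "S \<subseteq> Ztil"
  assumes inp: "\<And>e. e \<in> in_edges S \<Longrightarrow> inp e \<ge> 0" and xi: "\<And>y. y \<in> S \<Longrightarrow> xi y \<ge> 0"
  assumes e: "e \<in> ES S"
  shows "flow S inp xi e \<ge> 0"
proof -
  have step: "flow S inp xi ((t, x), (t', x')) \<ge> 0"
    if 1: "((t, x), (t', x')) \<in> ES S"
      "(t, x) \<in> S \<Longrightarrow> flow S inp xi (ea (t, x)) \<ge> 0 \<and> flow S inp xi (ed (t, x)) \<ge> 0"
    for t x t' x'
  proof (cases "(t, x) \<in> S")
    case True then show ?thesis
      unfolding flow_eqn[OF S(1,2), of inp xi t x t' x']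
      using 1(2)[OF True] xi[OF True] by simp
  next
    case False then show ?thesis
      unfolding flow_eqn[OF S(1,2), of inp xi t x t' x']
      using inp[OF ES_not_in[OF 1(1)]] by simp
  qed
  show ?thesis
    apply (rule flow_induct[OF S, where P="\<lambda>e. flow S inp xi e \<ge> 0", OF _ e])
    apply (rule step)
     apply assumption
    apply assumption
    done
qed

definition Idx :: "pt set \<Rightarrow> (edge + pt) set" where
  "Idx S = Inl ` in_edges S \<union> Inr ` S"

definition Mn :: "real measure \<Rightarrow> real measure \<Rightarrow> real measure \<Rightarrow> edge + pt \<Rightarrow> real measure" where
  "Mn p1 p2 p3 i = (case i of Inl e \<Rightarrow> (if ascending e then p1 else p2) | Inr y \<Rightarrow> p3)"

lemma noise_eq: "noise p1 p2 p3 S = PiM (Idx S) (Mn p1 p2 p3)"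
  unfolding noise_def Idx_def Mn_def ..

definition FF :: "pt set \<Rightarrow> (edge + pt \<Rightarrow> real) \<Rightarrow> edge \<Rightarrow> real" where
  "FF S \<omega> = (\<lambda>e\<in>ES S. flow S (\<lambda>e. \<omega> (Inl e)) (\<lambda>y. \<omega> (Inr y)) e)"

lemma PS_eq: "PS p1 p2 p3 S = distr (noise p1 p2 p3 S) (PiM (ES S) (\<lambda>_. nnb)) (FF S)"
  unfolding PS_def FF_def ..

lemma space_nnb: "space nnb = {0..}"
  unfolding nnb_def by (simp add: space_restrict_space)

lemma meas_nnb_iff: "f \<in> measurable M nnb \<longleftrightarrow> f \<in> borel_measurable M \<and> f \<in> space M \<rightarrow> {0..}"
  unfolding nnb_def measurable_restrict_space2_iff ..

lemma meas_from_nnb: "sets N = sets nnb \<Longrightarrow> f \<in> measurable M N \<Longrightarrow> f \<in> borel_measurable M"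
  using measurable_cong_sets[of M M N nnb] meas_nnb_iff by blast

locale hexsetup =
  fixes p1 p2 p3 :: "real measure"
  assumes P1: "prob_space p1" and P2: "prob_space p2" and P3: "prob_space p3"
    and S1: "sets p1 = sets nnb" and S2: "sets p2 = sets nnb" and S3: "sets p3 = sets nnb"
begin

abbreviation "M \<equiv> Mn p1 p2 p3"

lemma M_prob: "prob_space (M i)"
  unfolding Mn_def using P1 P2 P3 by (auto split: sum.split)

lemma M_sets: "sets (M i) = sets nnb"
  unfolding Mn_def using S1 S2 S3 by (auto split: sum.split)

lemma M_space: "space (M i) = {0..}"
  using M_sets[THEN sets_eq_imp_space_eq] space_nnb by simp

sublocale PP: product_prob_space M I for I
  by (simp add: product_prob_space_def product_prob_space_axioms_def product_sigma_finite_def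
      M_prob prob_space_imp_sigma_finite)

lemma comp_meas: "(\<lambda>\<omega>. \<omega> i) \<in> borel_measurable (PiM I M)"
proof (cases "i \<in> I")
  case True
  have "(\<lambda>x. x i) \<in> measurable (PiM I M) (M i)" by (rule measurable_component_singleton[OF True])
  then show ?thesis by (rule meas_from_nnb[OF M_sets])
next
  case False
  have eq: "\<omega> \<in> space (PiM I M) \<Longrightarrow> (\<lambda>\<omega>. undefined) \<omega> = \<omega> i" for \<omega> using False by (auto simp: space_PiM)
  show ?thesis using measurable_cong[of "PiM I M" "\<lambda>\<omega>. undefined" "\<lambda>\<omega>. \<omega> i" borel] eq by simp
qed

lemma flow_f_meas:
  "(\<lambda>\<omega>. flow_f n S (\<lambda>e. \<omega> (Inl e)) (\<lambda>y. \<omega> (Inr y)) e) \<in> borel_measurable (PiM I M)"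
proof (induction n arbitrary: e)
  case 0
  then show ?case using comp_meas by simp
next
  case (Suc n)
  obtain t x t' x' where e: "e = ((t, x), (t', x'))" by (metis prod.collapse)
  show ?case
  proof (cases "(t, x) \<in> S")
    case False then show ?thesis using comp_meas unfolding e by simp
  next
    case True
    note IH = Suc[of "((t - 1, x - 1), (t, x))"] Suc[of "((t - 1, x + 1), (t, x))"]
    show ?thesis
    proof (cases "x' = x + 1")
      case True
      then show ?thesis using \<open>(t, x) \<in> S\<close> unfolding e
        apply (simp add: Let_def)
        apply (intro borel_measurable_add borel_measurable_max borel_measurable_diff comp_meas IH measurable_const)
        apply simp_all
        done
    next
      case False
      then show ?thesis using \<open>(t, x) \<in> S\<close> unfolding e
        apply (simp add: Let_def)
        apply (intro borel_measurable_add borel_measurable_max borel_measurable_diff comp_meas IH measurable_const)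
        apply simp_all
        done
    qed
  qed
qed

lemma flow_meas:
  "(\<lambda>\<omega>. flow S (\<lambda>e. \<omega> (Inl e)) (\<lambda>y. \<omega> (Inr y)) e) \<in> borel_measurable (PiM I M)"
  unfolding flow_def by (rule flow_f_meas)

lemma FF_space:
  assumes S: "finite S" "S \<noteq> {}" "S \<subseteq> Ztil" and \<omega>: "\<omega> \<in> space (PiM (Idx S) M)" and e: "e \<in> ES S"
  shows "FF S \<omega> e \<ge> 0"
proof -
  have "flow S (\<lambda>e. \<omega> (Inl e)) (\<lambda>y. \<omega> (Inr y)) e \<ge> 0"
  proof (rule flow_nonneg[OF S _ _ e])
    fix e assume "e \<in> in_edges S"
    then have "Inl e \<in> Idx S" unfolding Idx_def by auto
    then show "\<omega> (Inl e) \<ge> 0" using \<omega> M_space by (auto simp: space_PiM PiE_iff)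
  next
    fix y assume "y \<in> S"
    then have "Inr y \<in> Idx S" unfolding Idx_def by auto
    then show "\<omega> (Inr y) \<ge> 0" using \<omega> M_space by (auto simp: space_PiM PiE_iff)
  qed
  then show ?thesis unfolding FF_def using e by simp
qed

lemma FF_meas:
  assumes S: "finite S" "S \<noteq> {}" "S \<subseteq> Ztil"
  shows "FF S \<in> measurable (PiM (Idx S) M) (PiM (ES S) (\<lambda>_. nnb))"
  unfolding FF_def
proof (rule measurable_restrict)
  fix e assume e: "e \<in> ES S"
  show "(\<lambda>\<omega>. flow S (\<lambda>e. \<omega> (Inl e)) (\<lambda>y. \<omega> (Inr y)) e) \<in> measurable (PiM (Idx S) M) nnb"
    unfolding meas_nnb_iff
    using flow_meas FF_space[OF S _ e] e by (auto simp: FF_def)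
qed

lemma noise_prob: "prob_space (noise p1 p2 p3 S)"
  unfolding noise_eq by (rule prob_space_PiM) (rule M_prob)

lemma PS_prob:
  assumes S: "finite S" "S \<noteq> {}" "S \<subseteq> Ztil"
  shows "prob_space (PS p1 p2 p3 S)"
  unfolding PS_eq noise_eq
  by (rule prob_space.prob_space_distr[OF prob_space_PiM[OF M_prob] FF_meas[OF S]])

lemma PS_sets: "sets (PS p1 p2 p3 S) = sets (PiM (ES S) (\<lambda>_. nnb))"
  unfolding PS_eq by simp

end

lemma meas_into_nnb:
  assumes "sets N = sets nnb" "f \<in> borel_measurable M" "\<And>x. x \<in> space M \<Longrightarrow> f x \<ge> 0"
  shows "f \<in> measurable M N"
proof -
  have "f \<in> measurable M nnb" unfolding meas_nnb_iff using assms by auto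
  then show ?thesis using measurable_cong_sets[of M M N nnb] assms(1) by simp
qed

locale hexR = hexsetup +
  assumes R: "distr (p1 \<Otimes>\<^sub>M (p2 \<Otimes>\<^sub>M p3)) (p1 \<Otimes>\<^sub>M (p2 \<Otimes>\<^sub>M p3)) R3 = p1 \<Otimes>\<^sub>M (p2 \<Otimes>\<^sub>M p3)"
begin

abbreviation "P3 \<equiv> p1 \<Otimes>\<^sub>M (p2 \<Otimes>\<^sub>M p3)"

lemma space_p: "space p1 = {0..}" "space p2 = {0..}" "space p3 = {0..}"
  using S1 S2 S3 by (simp_all add: sets_eq_imp_space_eq space_nnb)

lemma space_P3: "space P3 = {0..} \<times> ({0..} \<times> {0..})"
  by (simp add: space_pair_measure space_p)

lemma sf23: "sigma_finite_measure (p2 \<Otimes>\<^sub>M p3)" "sigma_finite_measure p3"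
proof -
  interpret a: prob_space p2 by (rule P2)
  interpret b: prob_space p3 by (rule P3)
  interpret c: pair_prob_space p2 p3 by unfold_locales
  show "sigma_finite_measure (p2 \<Otimes>\<^sub>M p3)" "sigma_finite_measure p3"
    by (simp_all add: c.P.sigma_finite_measure_axioms b.sigma_finite_measure_axioms)
qed

lemma P3_Times:
  assumes "A \<in> sets p1" "B \<in> sets p2" "C \<in> sets p3"
  shows "emeasure P3 (A \<times> (B \<times> C)) = emeasure p1 A * (emeasure p2 B * emeasure p3 C)"
proof -
  have "B \<times> C \<in> sets (p2 \<Otimes>\<^sub>M p3)" using assms by simp
  then show ?thesis
    using sigma_finite_measure.emeasure_pair_measure_Times[OF sf23(1) assms(1)]
      sigma_finite_measure.emeasure_pair_measure_Times[OF sf23(2) assms(2,3)] by simp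
qed

lemma proj_meas: "(\<lambda>x. fst x) \<in> borel_measurable P3" "(\<lambda>x. fst (snd x)) \<in> borel_measurable P3"
  "(\<lambda>x. snd (snd x)) \<in> borel_measurable P3"
proof -
  have "(\<lambda>x. fst x) \<in> measurable P3 p1" by simp
  then show "(\<lambda>x. fst x) \<in> borel_measurable P3" by (rule meas_from_nnb[OF S1])
  have "(\<lambda>x. fst (snd x)) \<in> measurable P3 p2" by simp
  then show "(\<lambda>x. fst (snd x)) \<in> borel_measurable P3" by (rule meas_from_nnb[OF S2])
  have "(\<lambda>x. snd (snd x)) \<in> measurable P3 p3" by simp
  then show "(\<lambda>x. snd (snd x)) \<in> borel_measurable P3" by (rule meas_from_nnb[OF S3])
qed

lemma R3_meas: "R3 \<in> measurable P3 P3"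
proof -
  have m1: "(\<lambda>x. snd (snd x) + max (fst x - fst (snd x)) 0) \<in> measurable P3 p1"
    by (rule meas_into_nnb[OF S1]) (auto simp: space_P3 intro!: borel_measurable_add borel_measurable_max borel_measurable_diff borel_measurable_min proj_meas)
  have m2: "(\<lambda>x. snd (snd x) + max (fst (snd x) - fst x) 0) \<in> measurable P3 p2"
    by (rule meas_into_nnb[OF S2]) (auto simp: space_P3 intro!: borel_measurable_add borel_measurable_max borel_measurable_diff borel_measurable_min proj_meas)
  have m3: "(\<lambda>x. min (fst x) (fst (snd x))) \<in> measurable P3 p3"
    by (rule meas_into_nnb[OF S3]) (auto simp: space_P3 intro!: borel_measurable_add borel_measurable_max borel_measurable_diff borel_measurable_min proj_meas)
  have eq: "R3 = (\<lambda>x. (snd (snd x) + max (fst x - fst (snd x)) 0, snd (snd x) + max (fst (snd x) - fst x) 0, min (fst x) (fst (snd x))))"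
    unfolding R3_def by (auto simp: fun_eq_iff split: prod.split)
  have "(\<lambda>x. (snd (snd x) + max (fst x - fst (snd x)) 0, snd (snd x) + max (fst (snd x) - fst x) 0, min (fst x) (fst (snd x)))) \<in> measurable P3 P3"
    by (intro measurable_Pair m1 m2 m3)
  then show ?thesis unfolding eq .
qed

lemma R3_marg:
  assumes Y1: "Y1 \<in> sets p1" and Y2: "Y2 \<in> sets p2"
  shows "emeasure P3 {x \<in> space P3. snd (snd x) + max (fst x - fst (snd x)) 0 \<in> Y1 \<and> snd (snd x) + max (fst (snd x) - fst x) 0 \<in> Y2}
     = emeasure p1 Y1 * emeasure p2 Y2"
proof -
  have W: "Y1 \<times> (Y2 \<times> space p3) \<in> sets P3" using Y1 Y2 by simp
  have "{x \<in> space P3. snd (snd x) + max (fst x - fst (snd x)) 0 \<in> Y1 \<and> snd (snd x) + max (fst (snd x) - fst x) 0 \<in> Y2}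
      = R3 -` (Y1 \<times> (Y2 \<times> space p3)) \<inter> space P3"
    by (auto simp: R3_def space_P3 space_p)
  also have "emeasure P3 \<dots> = emeasure (distr P3 P3 R3) (Y1 \<times> (Y2 \<times> space p3))"
    by (rule emeasure_distr[OF R3_meas W, symmetric])
  also have "\<dots> = emeasure P3 (Y1 \<times> (Y2 \<times> space p3))" unfolding R ..
  also have "\<dots> = emeasure p1 Y1 * emeasure p2 Y2"
    using P3_Times[OF Y1 Y2 sets.top] prob_space.emeasure_space_1[OF P3] by simp
  finally show ?thesis .
qed

definition emb3 :: "(edge + pt) \<Rightarrow> (edge + pt) \<Rightarrow> (edge + pt) \<Rightarrow> real \<times> real \<times> real \<Rightarrow> (edge + pt \<Rightarrow> real)" where
  "emb3 a b c x = (\<lambda>i\<in>{a, b, c}. if i = a then fst x else if i = b then fst (snd x) else snd (snd x))"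

lemma emb3_meas:
  assumes abc: "a \<noteq> b" "a \<noteq> c" "b \<noteq> c" and Ma: "M a = p1" and Mb: "M b = p2" and Mc: "M c = p3"
  shows "emb3 a b c \<in> measurable P3 (PiM {a, b, c} M)"
  unfolding emb3_def
proof (rule measurable_restrict)
  fix i assume i: "i \<in> {a, b, c}"
  show "(\<lambda>x. if i = a then fst x else if i = b then fst (snd x) else snd (snd x)) \<in> measurable P3 (M i)"
  proof (cases "i = a")
    case True then show ?thesis using Ma by simp
  next
    case False
    show ?thesis
    proof (cases "i = b")
      case True then show ?thesis using Mb abc by simp
    next
      case F2: False
      then have "i = c" using i False by auto
      then show ?thesis using Mc abc False F2 by simp
    qed
  qed
qed

lemma emb3_distr:
  assumes abc: "a \<noteq> b" "a \<noteq> c" "b \<noteq> c" and Ma: "M a = p1" and Mb: "M b = p2" and Mc: "M c = p3"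
  shows "distr P3 (PiM {a, b, c} M) (emb3 a b c) = PiM {a, b, c} M"
proof (rule PP.PiM_eqI)
  show "finite {a, b, c}" by simp
  show "sets (distr P3 (PiM {a, b, c} M) (emb3 a b c)) = sets (PiM {a, b, c} M)" by simp
  fix A assume A: "\<And>i. i \<in> {a, b, c} \<Longrightarrow> A i \<in> sets (M i)"
  have Aa: "A a \<in> sets p1" using A[of a] Ma by simp
  have Ab: "A b \<in> sets p2" using A[of b] Mb by simp
  have Ac: "A c \<in> sets p3" using A[of c] Mc by simp
  have sub: "A a \<subseteq> {0..}" "A b \<subseteq> {0..}" "A c \<subseteq> {0..}"
    using sets.sets_into_space[OF Aa] sets.sets_into_space[OF Ab] sets.sets_into_space[OF Ac] space_p by auto
  have "emb3 a b c -` Pi\<^sub>E {a, b, c} A \<inter> space P3 = A a \<times> (A b \<times> A c)"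
  proof (intro set_eqI iffI)
    fix x assume "x \<in> emb3 a b c -` Pi\<^sub>E {a, b, c} A \<inter> space P3"
    then have "emb3 a b c x a \<in> A a" "emb3 a b c x b \<in> A b" "emb3 a b c x c \<in> A c" by auto
    then show "x \<in> A a \<times> (A b \<times> A c)" using abc unfolding emb3_def by (cases x) auto
  next
    fix x assume x: "x \<in> A a \<times> (A b \<times> A c)"
    then have "x \<in> space P3" using sub unfolding space_P3 by auto
    moreover have "emb3 a b c x \<in> Pi\<^sub>E {a, b, c} A" using x abc unfolding emb3_def by (auto simp: PiE_iff)
    ultimately show "x \<in> emb3 a b c -` Pi\<^sub>E {a, b, c} A \<inter> space P3" by simp
  qed
  moreover have "Pi\<^sub>E {a, b, c} A \<in> sets (PiM {a, b, c} M)" using A by (intro sets_PiM_I_finite) auto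
  ultimately have "emeasure (distr P3 (PiM {a, b, c} M) (emb3 a b c)) (Pi\<^sub>E {a, b, c} A) = emeasure P3 (A a \<times> (A b \<times> A c))"
    using emeasure_distr[OF emb3_meas[OF assms]] by simp
  also have "\<dots> = emeasure p1 (A a) * (emeasure p2 (A b) * emeasure p3 (A c))" by (rule P3_Times[OF Aa Ab Ac])
  also have "\<dots> = (\<Prod>i\<in>{a, b, c}. emeasure (M i) (A i))" using abc Ma Mb Mc by (simp add: mult.assoc)
  finally show "emeasure (distr P3 (PiM {a, b, c} M) (emb3 a b c)) (Pi\<^sub>E {a, b, c} A) = (\<Prod>i\<in>{a, b, c}. emeasure (M i) (A i))" .
qed

end

definition oute :: "pt \<Rightarrow> (edge + pt \<Rightarrow> real) \<Rightarrow> edge \<Rightarrow> real" where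
  "oute y \<omega> e = \<omega> (Inr y) + (if snd (snd e) = snd y + 1 then max (\<omega> (Inl (ea y)) - \<omega> (Inl (ed y))) 0
      else max (\<omega> (Inl (ed y)) - \<omega> (Inl (ea y))) 0)"

definition Gm :: "pt set \<Rightarrow> pt \<Rightarrow> (edge + pt \<Rightarrow> real) \<Rightarrow> (edge + pt \<Rightarrow> real)" where
  "Gm T y \<omega> = (\<lambda>i\<in>Idx T. case i of Inl e \<Rightarrow> if fst e = y then oute y \<omega> e else \<omega> i | Inr z \<Rightarrow> \<omega> i)"

definition ismax :: "pt set \<Rightarrow> pt \<Rightarrow> bool" where
  "ismax T y \<longleftrightarrow> (fst y + 1, snd y + 1) \<notin> T \<and> (fst y + 1, snd y - 1) \<notin> T"

definition ismin :: "pt set \<Rightarrow> pt \<Rightarrow> bool" where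
  "ismin T y \<longleftrightarrow> (fst y - 1, snd y - 1) \<notin> T \<and> (fst y - 1, snd y + 1) \<notin> T"

lemma Edges_cases:
  assumes "e \<in> Edges"
  obtains t x where "e = ((t, x), (t + 1, x + 1))" "even (t + x)" | t x where "e = ((t, x), (t + 1, x - 1))" "even (t + x)"
  using assms unfolding Edges_def by auto

lemma in_edges_upper:
  assumes "e \<in> ES T" "fst e \<notin> T"
  shows "snd e = (fst (fst e) + 1, snd (fst e) + 1) \<or> snd e = (fst (fst e) + 1, snd (fst e) - 1)"
  using assms unfolding ES_def by (auto elim: Edges_cases)

lemma flow_step_eq:
  assumes T: "finite T" "T \<noteq> {}" "T \<subseteq> Ztil" and y: "y \<in> Ztil" "y \<notin> T"
    and mm: "ismax T y \<or> ismin T y" and e: "e \<in> ES T"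
  shows "flow (insert y T) (\<lambda>e. \<omega> (Inl e)) (\<lambda>z. \<omega> (Inr z)) e
       = flow T (\<lambda>e. Gm T y \<omega> (Inl e)) (\<lambda>z. Gm T y \<omega> (Inr z)) e"
proof -
  let ?T' = "insert y T"
  have T': "finite ?T'" "?T' \<noteq> {}" "?T' \<subseteq> Ztil" using T y by auto
  have step: "flow ?T' (\<lambda>e. \<omega> (Inl e)) (\<lambda>z. \<omega> (Inr z)) ((t, x), (t', x'))
       = flow T (\<lambda>e. Gm T y \<omega> (Inl e)) (\<lambda>z. Gm T y \<omega> (Inr z)) ((t, x), (t', x'))"
    if 1: "((t, x), (t', x')) \<in> ES T"
      "(t, x) \<in> T \<Longrightarrow> flow ?T' (\<lambda>e. \<omega> (Inl e)) (\<lambda>z. \<omega> (Inr z)) (ea (t, x)) = flow T (\<lambda>e. Gm T y \<omega> (Inl e)) (\<lambda>z. Gm T y \<omega> (Inr z)) (ea (t, x))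
         \<and> flow ?T' (\<lambda>e. \<omega> (Inl e)) (\<lambda>z. \<omega> (Inr z)) (ed (t, x)) = flow T (\<lambda>e. Gm T y \<omega> (Inl e)) (\<lambda>z. Gm T y \<omega> (Inr z)) (ed (t, x))"
    for t x t' x'
  proof (cases "(t, x) \<in> T")
    case True
    have "Inr (t, x) \<in> Idx T" using True unfolding Idx_def by auto
    then have g: "Gm T y \<omega> (Inr (t, x)) = \<omega> (Inr (t, x))" unfolding Gm_def by simp
    show ?thesis
      unfolding flow_eqn[OF T(1,2), of _ _ t x t' x'] flow_eqn[OF T'(1,2), of _ _ t x t' x']
      using 1(2)[OF True] True g by simp
  next
    case False
    have ie: "((t, x), (t', x')) \<in> in_edges T" using ES_not_in[OF 1(1)] False by simp
    then have Ie: "Inl ((t, x), (t', x')) \<in> Idx T" unfolding Idx_def by auto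
    show ?thesis
    proof (cases "(t, x) = y")
      case True
      have up: "(t', x') = (t + 1, x + 1) \<or> (t', x') = (t + 1, x - 1)" using in_edges_upper[OF 1(1)] False by simp
      have sT: "(t', x') \<in> T" using ie unfolding in_edges_def by simp
      have mn: "ismin T y" using mm up sT True unfolding ismax_def by auto
      have l1: "(t - 1, x - 1) \<notin> ?T'" "(t - 1, x + 1) \<notin> ?T'" using mn True y(2) unfolding ismin_def by auto
      have fa: "flow ?T' (\<lambda>e. \<omega> (Inl e)) (\<lambda>z. \<omega> (Inr z)) (ea y) = \<omega> (Inl (ea y))"
        unfolding ea_def using flow_eqn[OF T'(1,2), of _ _ "t - 1" "x - 1" t x] l1 True by auto
      have fd: "flow ?T' (\<lambda>e. \<omega> (Inl e)) (\<lambda>z. \<omega> (Inr z)) (ed y) = \<omega> (Inl (ed y))"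
        unfolding ed_def using flow_eqn[OF T'(1,2), of _ _ "t - 1" "x + 1" t x] l1 True by auto
      have "flow ?T' (\<lambda>e. \<omega> (Inl e)) (\<lambda>z. \<omega> (Inr z)) ((t, x), (t', x')) = oute y \<omega> ((t, x), (t', x'))"
      proof -
        have sy: "snd y = x" "y = (t, x)" using True by auto
        show ?thesis unfolding flow_eqn[OF T'(1,2), of _ _ t x t' x'] oute_def using fa fd sy by simp
      qed
      moreover have "flow T (\<lambda>e. Gm T y \<omega> (Inl e)) (\<lambda>z. Gm T y \<omega> (Inr z)) ((t, x), (t', x')) = oute y \<omega> ((t, x), (t', x'))"
        unfolding flow_eqn[OF T(1,2), of _ _ t x t' x'] using False Ie True unfolding Gm_def by simp
      ultimately show ?thesis by simp
    next
      case F2: False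
      have "(t, x) \<notin> ?T'" using F2 False by simp
      then show ?thesis
        unfolding flow_eqn[OF T(1,2), of _ _ t x t' x'] flow_eqn[OF T'(1,2), of _ _ t x t' x']
        using False F2 Ie unfolding Gm_def by simp
    qed
  qed
  show ?thesis
    apply (rule flow_induct[OF T, where P="\<lambda>e. flow ?T' (\<lambda>e. \<omega> (Inl e)) (\<lambda>z. \<omega> (Inr z)) e
       = flow T (\<lambda>e. Gm T y \<omega> (Inl e)) (\<lambda>z. Gm T y \<omega> (Inr z)) e", OF _ e])
    apply (rule step)
     apply assumption
    apply assumption
    done
qed

lemma ES_mono: "T \<subseteq> T' \<Longrightarrow> ES T \<subseteq> ES T'"
  unfolding ES_def by auto

lemma FF_step:
  assumes T: "finite T" "T \<noteq> {}" "T \<subseteq> Ztil" and y: "y \<in> Ztil" "y \<notin> T"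
    and mm: "ismax T y \<or> ismin T y"
  shows "restrict (FF (insert y T) \<omega>) (ES T) = FF T (Gm T y \<omega>)"
proof (rule ext)
  fix e
  show "restrict (FF (insert y T) \<omega>) (ES T) e = FF T (Gm T y \<omega>) e"
  proof (cases "e \<in> ES T")
    case True
    then have "e \<in> ES (insert y T)" using ES_mono[of T "insert y T"] by auto
    then show ?thesis using True flow_step_eq[OF T y mm True] unfolding FF_def by simp
  qed (simp add: FF_def)
qed

lemma finite_in_edges: "finite T \<Longrightarrow> finite (in_edges T)"
proof -
  assume f: "finite T"
  have "in_edges T \<subseteq> (\<lambda>(z, k). ((fst z - 1, snd z + k), z)) ` (T \<times> {-1, 1})"
  proof
    fix e assume e: "e \<in> in_edges T"
    then have "e \<in> Edges" "snd e \<in> T" unfolding in_edges_def by auto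
    then show "e \<in> (\<lambda>(z, k). ((fst z - 1, snd z + k), z)) ` (T \<times> {-1, 1})"
      by (elim Edges_cases) (force simp: image_iff)+
  qed
  then show ?thesis by (rule finite_subset) (use f in auto)
qed

lemma finite_ES: "finite T \<Longrightarrow> finite (ES T)"
proof -
  assume f: "finite T"
  have "ES T \<subseteq> (\<lambda>(z, k). ((fst z - 1, snd z + k), z)) ` (T \<times> {-1, 1}) \<union> (\<lambda>(z, k). (z, (fst z + 1, snd z + k))) ` (T \<times> {-1, 1})"
  proof
    fix e assume e: "e \<in> ES T"
    then have "e \<in> Edges" "fst e \<in> T \<or> snd e \<in> T" unfolding ES_def by auto
    then show "e \<in> (\<lambda>(z, k). ((fst z - 1, snd z + k), z)) ` (T \<times> {-1, 1}) \<union> (\<lambda>(z, k). (z, (fst z + 1, snd z + k))) ` (T \<times> {-1, 1})"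
      by (elim Edges_cases) (force simp: image_iff)+
  qed
  then show ?thesis by (rule finite_subset) (use f in auto)
qed

lemma finite_Idx: "finite T \<Longrightarrow> finite (Idx T)"
  unfolding Idx_def using finite_in_edges by auto

lemma Idx_max:
  assumes "ismax T y" "y \<notin> T"
  shows "Idx T \<subseteq> Idx (insert y T)" "\<And>e. Inl e \<in> Idx T \<Longrightarrow> fst e \<noteq> y"
proof -
  have ne: "fst e \<noteq> y" if "e \<in> in_edges T" for e
  proof
    assume "fst e = y"
    moreover have "e \<in> ES T" "fst e \<notin> T" "snd e \<in> T" using that unfolding in_edges_def ES_def by auto
    ultimately show False using in_edges_upper[of e T] assms(1) unfolding ismax_def by auto
  qed
  show "Idx T \<subseteq> Idx (insert y T)" unfolding Idx_def in_edges_def using ne unfolding in_edges_def by auto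
  show "\<And>e. Inl e \<in> Idx T \<Longrightarrow> fst e \<noteq> y" using ne unfolding Idx_def by auto
qed

lemma ea_ed_ne: "ea y \<noteq> ed y" unfolding ea_def ed_def by simp

lemma in_edges_min:
  assumes "ismin T y" "y \<notin> T" "y \<in> Ztil"
  shows "in_edges (insert y T) = {e \<in> in_edges T. fst e \<noteq> y} \<union> {ea y, ed y}"
proof (intro set_eqI iffI)
  fix e assume e: "e \<in> in_edges (insert y T)"
  then have E: "e \<in> Edges" "snd e \<in> insert y T" "fst e \<notin> insert y T" unfolding in_edges_def by auto
  show "e \<in> {e \<in> in_edges T. fst e \<noteq> y} \<union> {ea y, ed y}"
  proof (cases "snd e = y")
    case True
    then show ?thesis using E(1) unfolding ea_def ed_def by (elim Edges_cases) auto
  next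
    case False
    then show ?thesis using E unfolding in_edges_def by auto
  qed
next
  fix e assume e: "e \<in> {e \<in> in_edges T. fst e \<noteq> y} \<union> {ea y, ed y}"
  have eaE: "ea y \<in> Edges" "ed y \<in> Edges" using assms(3) unfolding ea_def ed_def Edges_def Ztil_def
    by (cases y; auto)+
  show "e \<in> in_edges (insert y T)"
    using e eaE assms(1,2) unfolding in_edges_def ismin_def ea_def ed_def by (cases y) auto
qed

context hexR
begin

lemma oute_meas: "(\<lambda>\<omega>. oute y \<omega> e) \<in> borel_measurable (PiM I M)"
  unfolding oute_def
  by (cases "snd (snd e) = snd y + 1")
     (simp_all add: borel_measurable_add borel_measurable_max borel_measurable_diff comp_meas)

lemma oute_nonneg: "\<omega> (Inr y) \<ge> 0 \<Longrightarrow> oute y \<omega> e \<ge> 0"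
  unfolding oute_def by simp

lemma Gm_meas:
  assumes y: "y \<notin> T"
  shows "Gm T y \<in> measurable (PiM (Idx (insert y T)) M) (PiM (Idx T) M)"
  unfolding Gm_def
proof (rule measurable_restrict)
  fix i assume i: "i \<in> Idx T"
  show "(\<lambda>\<omega>. case i of Inl e \<Rightarrow> if fst e = y then oute y \<omega> e else \<omega> i | Inr z \<Rightarrow> \<omega> i)
      \<in> measurable (PiM (Idx (insert y T)) M) (M i)"
  proof (cases i)
    case (Inl e)
    show ?thesis
    proof (cases "fst e = y")
      case True
      have "Inr y \<in> Idx (insert y T)" unfolding Idx_def by auto
      then have "\<omega> \<in> space (PiM (Idx (insert y T)) M) \<Longrightarrow> \<omega> (Inr y) \<ge> 0" for \<omega>
        using M_space by (auto simp: space_PiM PiE_iff)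
      then have "(\<lambda>\<omega>. oute y \<omega> e) \<in> measurable (PiM (Idx (insert y T)) M) (M i)"
        by (intro meas_into_nnb[OF M_sets] oute_meas oute_nonneg)
      then show ?thesis using Inl True by simp
    next
      case False
      have "e \<in> in_edges T" using i Inl unfolding Idx_def by auto
      then have "e \<in> in_edges (insert y T)" using False unfolding in_edges_def by auto
      then have "i \<in> Idx (insert y T)" using Inl unfolding Idx_def by auto
      then show ?thesis using Inl False by simp
    qed
  next
    case (Inr z)
    then have "i \<in> Idx (insert y T)" using i unfolding Idx_def by auto
    then show ?thesis using Inr by simp
  qed
qed

lemma main_max:
  assumes T: "finite T" and y: "y \<notin> T" "ismax T y"
  shows "distr (PiM (Idx (insert y T)) M) (PiM (Idx T) M) (Gm T y) = PiM (Idx T) M"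
proof -
  have eq: "Gm T y \<omega> = restrict \<omega> (Idx T)" for \<omega>
    unfolding Gm_def using Idx_max(2)[OF y(2,1)] by (auto simp: fun_eq_iff split: sum.split)
  have "distr (PiM (Idx (insert y T)) M) (PiM (Idx T) M) (Gm T y)
      = distr (PiM (Idx (insert y T)) M) (PiM (Idx T) M) (\<lambda>\<omega>. restrict \<omega> (Idx T))"
    by (rule distr_cong) (simp_all add: eq)
  also have "\<dots> = PiM (Idx T) M"
    by (rule PP.distr_restrict[symmetric]) (use Idx_max(1)[OF y(2,1)] finite_Idx T in auto)
  finally show ?thesis .
qed

end

context hexR
begin

definition Hm :: "pt \<Rightarrow> (edge + pt) set \<Rightarrow> (edge + pt \<Rightarrow> real) \<Rightarrow> (edge + pt \<Rightarrow> real)" where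
  "Hm y C b = (\<lambda>i\<in>C. oute y b (projl i))"

lemma M_simps: "M (Inr z) = p3" "ascending e \<Longrightarrow> M (Inl e) = p1" "\<not> ascending e \<Longrightarrow> M (Inl e) = p2"
  unfolding Mn_def by simp_all

lemma asc_simps: "ascending (ea y)" "\<not> ascending (ed y)"
  "ascending (y, (fst y + 1, snd y + 1))" "\<not> ascending (y, (fst y + 1, snd y - 1))"
  unfolding ascending_def ea_def ed_def by simp_all

lemma Hm_distr:
  assumes C: "C \<subseteq> {Inl (y, (fst y + 1, snd y + 1)), Inl (y, (fst y + 1, snd y - 1))}"
  shows "distr (PiM {Inl (ea y), Inl (ed y), Inr y} M) (PiM C M) (Hm y C) = PiM C M"
proof -
  define a :: "edge + pt" where "a = Inl (ea y)"
  define b :: "edge + pt" where "b = Inl (ed y)"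
  define c :: "edge + pt" where "c = Inr y"
  define u :: "edge + pt" where "u = Inl (y, (fst y + 1, snd y + 1))"
  define v :: "edge + pt" where "v = Inl (y, (fst y + 1, snd y - 1))"
  have abc: "a \<noteq> b" "a \<noteq> c" "b \<noteq> c" unfolding a_def b_def c_def using ea_ed_ne by auto
  have Mabc: "M a = p1" "M b = p2" "M c = p3" "M u = p1" "M v = p2"
    unfolding a_def b_def c_def u_def v_def using asc_simps by (simp_all add: M_simps)
  have uv: "u \<noteq> v" unfolding u_def v_def by simp
  have C': "C \<subseteq> {u, v}" using C unfolding u_def v_def .
  define K where "K x = (\<lambda>i\<in>C. if i = u then snd (snd x) + max (fst x - fst (snd x)) 0
                                    else snd (snd x) + max (fst (snd x) - fst x) 0)" for x :: "real \<times> real \<times> real"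
  have Hmeas: "Hm y C \<in> measurable (PiM {a, b, c} M) (PiM C M)"
    unfolding Hm_def
  proof (rule measurable_restrict)
    fix i assume "i \<in> C"
    have "c \<in> {a, b, c}" by simp
    then have "\<omega> \<in> space (PiM {a, b, c} M) \<Longrightarrow> \<omega> (Inr y) \<ge> 0" for \<omega>
      using M_space unfolding c_def by (auto simp: space_PiM PiE_iff)
    then show "(\<lambda>\<omega>. oute y \<omega> (projl i)) \<in> measurable (PiM {a, b, c} M) (M i)"
      by (intro meas_into_nnb[OF M_sets] oute_meas oute_nonneg)
  qed
  have Kmeas: "K \<in> measurable P3 (PiM C M)"
    unfolding K_def
  proof (rule measurable_restrict)
    fix i assume "i \<in> C"
    show "(\<lambda>x. if i = u then snd (snd x) + max (fst x - fst (snd x)) 0 else snd (snd x) + max (fst (snd x) - fst x) 0)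
        \<in> measurable P3 (M i)"
      by (cases "i = u") (auto simp: space_P3 intro!: meas_into_nnb[OF M_sets] borel_measurable_add
          borel_measurable_max borel_measurable_diff proj_meas)
  qed
  have HK: "Hm y C (emb3 a b c x) = K x" for x
  proof (rule ext)
    fix i
    show "Hm y C (emb3 a b c x) i = K x i"
    proof (cases "i \<in> C")
      case True
      then have "i = u \<or> i = v" using C' by auto
      then show ?thesis
      proof
        assume iu: "i = u"
        show ?thesis using True abc unfolding iu Hm_def K_def oute_def emb3_def
          by (simp add: u_def a_def[symmetric] b_def[symmetric] c_def[symmetric])
      next
        assume iv: "i = v"
        show ?thesis using True abc uv unfolding iv Hm_def K_def oute_def emb3_def
          by (simp add: v_def a_def[symmetric] b_def[symmetric] c_def[symmetric])
      qed
    qed (simp add: Hm_def K_def)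
  qed
  have Kdistr: "distr P3 (PiM C M) K = PiM C M"
  proof (rule PP.PiM_eqI)
    show "finite C" using C' finite_subset by blast
    show "sets (distr P3 (PiM C M) K) = sets (PiM C M)" by simp
    fix X assume X: "\<And>i. i \<in> C \<Longrightarrow> X i \<in> sets (M i)"
    define Y1 where "Y1 = (if u \<in> C then X u else space p1)"
    define Y2 where "Y2 = (if v \<in> C then X v else space p2)"
    have Y1: "Y1 \<in> sets p1" unfolding Y1_def using X[of u] Mabc by auto
    have Y2: "Y2 \<in> sets p2" unfolding Y2_def using X[of v] Mabc by auto
    have "K -` Pi\<^sub>E C X \<inter> space P3 = {x \<in> space P3. snd (snd x) + max (fst x - fst (snd x)) 0 \<in> Y1 \<and> snd (snd x) + max (fst (snd x) - fst x) 0 \<in> Y2}"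
    proof (intro set_eqI iffI)
      fix x assume x: "x \<in> K -` Pi\<^sub>E C X \<inter> space P3"
      then have xs: "x \<in> space P3" by simp
      have "K x \<in> Pi\<^sub>E C X" using x by simp
      then have k: "i \<in> C \<Longrightarrow> K x i \<in> X i" for i by (auto simp: PiE_iff)
      have "snd (snd x) + max (fst x - fst (snd x)) 0 \<in> Y1"
        using k[of u] xs unfolding Y1_def K_def by (auto simp: space_P3 space_p)
      moreover have "snd (snd x) + max (fst (snd x) - fst x) 0 \<in> Y2"
        using k[of v] xs uv unfolding Y2_def K_def by (auto simp: space_P3 space_p)
      ultimately show "x \<in> {x \<in> space P3. snd (snd x) + max (fst x - fst (snd x)) 0 \<in> Y1 \<and> snd (snd x) + max (fst (snd x) - fst x) 0 \<in> Y2}"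
        using xs by simp
    next
      fix x assume x: "x \<in> {x \<in> space P3. snd (snd x) + max (fst x - fst (snd x)) 0 \<in> Y1 \<and> snd (snd x) + max (fst (snd x) - fst x) 0 \<in> Y2}"
      have "K x \<in> Pi\<^sub>E C X"
      proof -
        have "i \<in> C \<Longrightarrow> K x i \<in> X i" for i
        proof -
          assume i: "i \<in> C"
          then have "i = u \<or> i = v" using C' by auto
          then show "K x i \<in> X i"
          proof
            assume "i = u" then show ?thesis using x i unfolding K_def Y1_def by auto
          next
            assume "i = v" then show ?thesis using x i uv unfolding K_def Y2_def by auto
          qed
        qed
        moreover have "K x \<in> extensional C" unfolding K_def by simp
        ultimately show ?thesis by (auto simp: PiE_iff)
      qed
      then show "x \<in> K -` Pi\<^sub>E C X \<inter> space P3" using x by simp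
    qed
    moreover have "Pi\<^sub>E C X \<in> sets (PiM C M)" using X \<open>finite C\<close> by (intro sets_PiM_I_finite) auto
    ultimately have "emeasure (distr P3 (PiM C M) K) (Pi\<^sub>E C X)
        = emeasure P3 {x \<in> space P3. snd (snd x) + max (fst x - fst (snd x)) 0 \<in> Y1 \<and> snd (snd x) + max (fst (snd x) - fst x) 0 \<in> Y2}"
      using emeasure_distr[OF Kmeas] by simp
    also have "\<dots> = emeasure p1 Y1 * emeasure p2 Y2" by (rule R3_marg[OF Y1 Y2])
    also have "\<dots> = (\<Prod>i\<in>C. emeasure (M i) (X i))"
    proof -
      have e1: "emeasure p1 (space p1) = 1" "emeasure p2 (space p2) = 1"
        using prob_space.emeasure_space_1[OF P1] prob_space.emeasure_space_1[OF P2] by auto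
      consider "C = {}" | "C = {u}" | "C = {v}" | "C = {u, v}" using C' by blast
      then show ?thesis
        by cases (use uv e1 Mabc in \<open>simp_all add: Y1_def Y2_def\<close>)
    qed
    finally show "emeasure (distr P3 (PiM C M) K) (Pi\<^sub>E C X) = (\<Prod>i\<in>C. emeasure (M i) (X i))" .
  qed
  have "distr (PiM {a, b, c} M) (PiM C M) (Hm y C) = distr (distr P3 (PiM {a, b, c} M) (emb3 a b c)) (PiM C M) (Hm y C)"
    using emb3_distr[OF abc Mabc(1-3)] by simp
  also have "\<dots> = distr P3 (PiM C M) (Hm y C \<circ> emb3 a b c)"
    by (rule distr_distr[OF Hmeas emb3_meas[OF abc Mabc(1-3)]])
  also have "\<dots> = distr P3 (PiM C M) K"
    by (rule distr_cong) (simp_all add: HK)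
  also have "\<dots> = PiM C M" by (rule Kdistr)
  finally show ?thesis unfolding a_def b_def c_def .
qed

end

context hexR
begin

lemma main_min:
  assumes T: "finite T" "T \<subseteq> Ztil" and y: "y \<notin> T" "ismin T y" "y \<in> Ztil"
  shows "distr (PiM (Idx (insert y T)) M) (PiM (Idx T) M) (Gm T y) = PiM (Idx T) M"
proof -
  define C where "C = {i \<in> Idx T. \<exists>e. i = Inl e \<and> fst e = y}"
  define A where "A = Idx T - C"
  define B where "B = {Inl (ea y), Inl (ed y), Inr y :: edge + pt}"
  have Cuv: "C \<subseteq> {Inl (y, (fst y + 1, snd y + 1)), Inl (y, (fst y + 1, snd y - 1))}"
  proof
    fix i assume "i \<in> C"
    then obtain e where e: "i = Inl e" "fst e = y" "e \<in> in_edges T" unfolding C_def Idx_def by auto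
    then have "e \<in> ES T" "fst e \<notin> T" unfolding in_edges_def ES_def by auto
    from in_edges_upper[OF this] e show "i \<in> {Inl (y, (fst y + 1, snd y + 1)), Inl (y, (fst y + 1, snd y - 1))}"
      by (cases e) auto
  qed
  have nIdx: "Inl (ea y) \<notin> Idx T" "Inl (ed y) \<notin> Idx T" "Inr y \<notin> Idx T"
    using y(1) unfolding Idx_def in_edges_def ea_def ed_def by auto
  have AB: "A \<inter> B = {}" unfolding A_def B_def using nIdx by auto
  have AC: "A \<inter> C = {}" unfolding A_def by auto
  have IdxT: "Idx T = A \<union> C" unfolding A_def C_def by auto
  have IdxT': "Idx (insert y T) = A \<union> B"
    unfolding Idx_def in_edges_min[OF y(2,1,3)] A_def B_def C_def by auto
  have finA: "finite A" "finite B" "finite C" using finite_Idx[OF T(1)] unfolding IdxT B_def by auto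
  have Bc: "Inl (ea y) \<in> B" "Inl (ed y) \<in> B" "Inr y \<in> B" "Inl (ea y) \<notin> A" "Inl (ed y) \<notin> A" "Inr y \<notin> A"
    unfolding B_def using AB B_def by auto
  have HB: "distr (PiM B M) (PiM C M) (Hm y C) = PiM C M"
    unfolding B_def by (rule Hm_distr[OF Cuv])
  have Hmeas: "Hm y C \<in> measurable (PiM B M) (PiM C M)"
  proof -
    show ?thesis
      unfolding Hm_def
    proof (rule measurable_restrict)
      fix i assume "i \<in> C"
      have "\<omega> \<in> space (PiM B M) \<Longrightarrow> \<omega> (Inr y) \<ge> 0" for \<omega>
        using M_space Bc by (auto simp: space_PiM PiE_iff)
      then show "(\<lambda>\<omega>. oute y \<omega> (projl i)) \<in> measurable (PiM B M) (M i)"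
        by (intro meas_into_nnb[OF M_sets] oute_meas oute_nonneg)
    qed
  qed
  have Gmeas: "Gm T y \<in> measurable (PiM (A \<union> B) M) (PiM (Idx T) M)"
    using Gm_meas[OF y(1)] unfolding IdxT' .
  have pw: "Gm T y (merge A B p) = merge A C (fst p, Hm y C (snd p))" for p
  proof (rule ext)
    fix i
    obtain x z where p: "p = (x, z)" by fastforce
    have mB: "merge A B (x, z) (Inl (ea y)) = z (Inl (ea y))" "merge A B (x, z) (Inl (ed y)) = z (Inl (ed y))"
      "merge A B (x, z) (Inr y) = z (Inr y)" using Bc AB by simp_all
    show "Gm T y (merge A B p) i = merge A C (fst p, Hm y C (snd p)) i"
    proof (cases "i \<in> C")
      case True
      then obtain e where e: "i = Inl e" "fst e = y" "i \<in> Idx T" unfolding C_def by auto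
      then show ?thesis unfolding p using True AC mB
        by (simp add: Gm_def Hm_def oute_def)
    next
      case False
      show ?thesis
      proof (cases "i \<in> A")
        case True
        then have iI: "i \<in> Idx T" and ni: "\<And>e. i = Inl e \<Longrightarrow> fst e \<noteq> y" unfolding A_def C_def by auto
        have "Gm T y (merge A B (x, z)) i = merge A B (x, z) i"
          using iI ni unfolding Gm_def by (cases i) auto
        then show ?thesis unfolding p using True AB AC by simp
      next
        case F2: False
        then have "i \<notin> Idx T" using False IdxT by auto
        then show ?thesis unfolding p using False F2 by (simp add: Gm_def merge_def)
      qed
    qed
  qed
  have "distr (PiM (Idx (insert y T)) M) (PiM (Idx T) M) (Gm T y)
      = distr (distr (PiM A M \<Otimes>\<^sub>M PiM B M) (PiM (A \<union> B) M) (merge A B)) (PiM (Idx T) M) (Gm T y)"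
    unfolding IdxT' using PP.distr_merge[OF AB finA(1,2)] by simp
  also have "\<dots> = distr (PiM A M \<Otimes>\<^sub>M PiM B M) (PiM (Idx T) M) (Gm T y \<circ> merge A B)"
    by (rule distr_distr[OF Gmeas measurable_merge])
  also have "\<dots> = distr (PiM A M \<Otimes>\<^sub>M PiM B M) (PiM (Idx T) M) (merge A C \<circ> (\<lambda>(x, z). (x, Hm y C z)))"
    by (rule distr_cong) (auto simp: pw split: prod.split)
  also have "\<dots> = distr (distr (PiM A M \<Otimes>\<^sub>M PiM B M) (PiM A M \<Otimes>\<^sub>M PiM C M) (\<lambda>(x, z). (x, Hm y C z))) (PiM (Idx T) M) (merge A C)"
  proof (rule distr_distr[symmetric])
    show "merge A C \<in> measurable (PiM A M \<Otimes>\<^sub>M PiM C M) (PiM (Idx T) M)"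
      unfolding IdxT by (rule measurable_merge)
    show "(\<lambda>(x, z). (x, Hm y C z)) \<in> measurable (PiM A M \<Otimes>\<^sub>M PiM B M) (PiM A M \<Otimes>\<^sub>M PiM C M)"
      using Hmeas by (simp add: split_beta')
  qed
  also have "distr (PiM A M \<Otimes>\<^sub>M PiM B M) (PiM A M \<Otimes>\<^sub>M PiM C M) (\<lambda>(x, z). (x, Hm y C z))
      = distr (PiM A M) (PiM A M) (\<lambda>x. x) \<Otimes>\<^sub>M distr (PiM B M) (PiM C M) (Hm y C)"
  proof (rule pair_measure_distr[symmetric])
    show "(\<lambda>x. x) \<in> measurable (PiM A M) (PiM A M)" by simp
    show "Hm y C \<in> measurable (PiM B M) (PiM C M)" by (rule Hmeas)
    show "sigma_finite_measure (distr (PiM B M) (PiM C M) (Hm y C))"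
      unfolding HB by (rule prob_space_imp_sigma_finite[OF prob_space_PiM[OF M_prob]])
  qed
  also have "\<dots> = PiM A M \<Otimes>\<^sub>M PiM C M" unfolding HB by simp
  also have "distr (PiM A M \<Otimes>\<^sub>M PiM C M) (PiM (Idx T) M) (merge A C) = PiM (Idx T) M"
    unfolding IdxT by (rule PP.distr_merge[OF AC finA(1,3)])
  finally show ?thesis .
qed

lemma single_step:
  assumes T: "finite T" "T \<noteq> {}" "T \<subseteq> Ztil" and y: "y \<in> Ztil" "y \<notin> T"
    and mm: "ismax T y \<or> ismin T y"
  shows "distr (PS p1 p2 p3 (insert y T)) (PiM (ES T) (\<lambda>_. nnb)) (\<lambda>\<omega>. restrict \<omega> (ES T)) = PS p1 p2 p3 T"
proof -
  let ?T' = "insert y T"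
  have T': "finite ?T'" "?T' \<noteq> {}" "?T' \<subseteq> Ztil" using T y by auto
  have main: "distr (PiM (Idx ?T') M) (PiM (Idx T) M) (Gm T y) = PiM (Idx T) M"
    using mm main_max[OF T(1) y(2)] main_min[OF T(1,3) y(2) _ y(1)] by blast
  have rmeas: "(\<lambda>\<omega>. restrict \<omega> (ES T)) \<in> measurable (PiM (ES ?T') (\<lambda>_. nnb)) (PiM (ES T) (\<lambda>_. nnb))"
    using ES_mono[of T ?T'] by (intro measurable_restrict_subset) auto
  have "distr (PS p1 p2 p3 ?T') (PiM (ES T) (\<lambda>_. nnb)) (\<lambda>\<omega>. restrict \<omega> (ES T))
      = distr (PiM (Idx ?T') M) (PiM (ES T) (\<lambda>_. nnb)) ((\<lambda>\<omega>. restrict \<omega> (ES T)) \<circ> FF ?T')"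
    unfolding PS_eq noise_eq by (rule distr_distr[OF rmeas FF_meas[OF T']])
  also have "\<dots> = distr (PiM (Idx ?T') M) (PiM (ES T) (\<lambda>_. nnb)) (FF T \<circ> Gm T y)"
    by (rule distr_cong) (simp_all add: FF_step[OF T y mm])
  also have "\<dots> = distr (distr (PiM (Idx ?T') M) (PiM (Idx T) M) (Gm T y)) (PiM (ES T) (\<lambda>_. nnb)) (FF T)"
    by (rule distr_distr[symmetric, OF FF_meas[OF T] Gm_meas[OF y(2)]])
  also have "\<dots> = PS p1 p2 p3 T" unfolding main PS_eq noise_eq ..
  finally show ?thesis .
qed

end

lemma cone_le_refl: "cone_le a a" unfolding cone_le_def by simp

lemma exists_extreme:
  assumes S: "hexdom S" and T: "finite T" "S \<subseteq> T" "T \<subseteq> Ztil" and ne: "T - S \<noteq> {}"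
  shows "\<exists>y\<in>T - S. ismax (T - {y}) y \<or> ismin (T - {y}) y"
proof (rule ccontr)
  assume "\<not> ?thesis"
  then have H: "\<And>y. y \<in> T - S \<Longrightarrow> \<not> ismax (T - {y}) y \<and> \<not> ismin (T - {y}) y" by blast
  define tmax where "tmax = Max (fst ` T)"
  have up: "\<exists>w'\<in>S. cone_le w w'" if "w \<in> T" for w
    using that
  proof (induction "nat (tmax - fst w)" arbitrary: w rule: less_induct)
    case less
    show ?case
    proof (cases "w \<in> S")
      case True then show ?thesis using cone_le_refl by blast
    next
      case False
      then have "\<not> ismax (T - {w}) w" using H less.prems by blast
      then obtain w1 where w1: "w1 \<in> T" "w1 = (fst w + 1, snd w + 1) \<or> w1 = (fst w + 1, snd w - 1)"
        unfolding ismax_def by auto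
      have "fst w1 \<le> tmax" unfolding tmax_def using w1(1) T(1) by (auto intro: Max_ge)
      then have lt: "nat (tmax - fst w1) < nat (tmax - fst w)" using w1(2) by auto
      obtain w' where "w' \<in> S" "cone_le w1 w'" using less.hyps[OF lt w1(1)] by blast
      moreover have "cone_le w w1" using w1(2) unfolding cone_le_def by auto
      ultimately show ?thesis using cone_le_trans by blast
    qed
  qed
  have fin: "finite (T - S)" using T(1) by simp
  define tmin where "tmin = Min (fst ` (T - S))"
  have "tmin \<in> fst ` (T - S)" unfolding tmin_def using fin ne by (intro Min_in) auto
  then obtain y0 where y0: "y0 \<in> T - S" "fst y0 = tmin" by auto
  have ymin: "\<And>z. z \<in> T - S \<Longrightarrow> fst y0 \<le> fst z" unfolding y0(2) tmin_def using fin by auto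
  have "\<not> ismin (T - {y0}) y0" using H y0(1) by blast
  then obtain z where z: "z \<in> T" "z = (fst y0 - 1, snd y0 - 1) \<or> z = (fst y0 - 1, snd y0 + 1)"
    unfolding ismin_def by auto
  have "z \<in> S"
  proof (rule ccontr)
    assume "z \<notin> S"
    then have "fst y0 \<le> fst z" using ymin z(1) by blast
    then show False using z(2) by auto
  qed
  moreover obtain w' where "w' \<in> S" "cone_le y0 w'" using up y0(1) by blast
  moreover have "cone_le z y0" using z(2) unfolding cone_le_def by auto
  moreover have "y0 \<in> Ztil" using y0(1) T(3) by auto
  ultimately have "y0 \<in> S" using hex_convex[OF S] by blast
  then show False using y0(1) by simp
qed

context hexR
begin

lemma PS_self:
  assumes S: "finite S" "S \<noteq> {}" "S \<subseteq> Ztil"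
  shows "distr (PS p1 p2 p3 S) (PiM (ES S) (\<lambda>_. nnb)) (\<lambda>\<omega>. restrict \<omega> (ES S)) = PS p1 p2 p3 S"
proof -
  have "distr (PS p1 p2 p3 S) (PiM (ES S) (\<lambda>_. nnb)) (\<lambda>\<omega>. restrict \<omega> (ES S))
      = distr (PS p1 p2 p3 S) (PiM (ES S) (\<lambda>_. nnb)) (\<lambda>\<omega>. \<omega>)"
  proof (rule distr_cong)
    fix \<omega> assume "\<omega> \<in> space (PS p1 p2 p3 S)"
    then have "\<omega> \<in> space (PiM (ES S) (\<lambda>_. nnb))" using PS_sets[THEN sets_eq_imp_space_eq] by simp
    then show "restrict \<omega> (ES S) = \<omega>" by (simp add: space_PiM)
  qed simp_all
  also have "\<dots> = PS p1 p2 p3 S" by (rule distr_id2[OF PS_sets[symmetric]])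
  finally show ?thesis .
qed

lemma restrict_trans_distr:
  assumes "J \<subseteq> K" "sets N = sets (PiM L (\<lambda>_. nnb))" "K \<subseteq> L"
  shows "distr (distr N (PiM K (\<lambda>_. nnb)) (\<lambda>\<omega>. restrict \<omega> K)) (PiM J (\<lambda>_. nnb)) (\<lambda>\<omega>. restrict \<omega> J)
       = distr N (PiM J (\<lambda>_. nnb)) (\<lambda>\<omega>. restrict \<omega> J)"
proof -
  have m1: "(\<lambda>\<omega>. restrict \<omega> K) \<in> measurable N (PiM K (\<lambda>_. nnb))"
    using measurable_cong_sets[OF assms(2) refl] assms(3) by (auto intro!: measurable_restrict_subset)
  have m2: "(\<lambda>\<omega>. restrict \<omega> J) \<in> measurable (PiM K (\<lambda>_. nnb)) (PiM J (\<lambda>_. nnb))"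
    using assms(1) by (rule measurable_restrict_subset)
  show ?thesis
    unfolding distr_distr[OF m2 m1]
    by (rule distr_cong) (use assms(1) in \<open>auto simp: fun_eq_iff\<close>)
qed

lemma consistent:
  assumes S': "hexdom S'" and S'': "hexdom S''" and sub: "S' \<subseteq> S''"
  shows "distr (PS p1 p2 p3 S'') (PiM (ES S') (\<lambda>_. nnb)) (\<lambda>\<omega>. restrict \<omega> (ES S')) = PS p1 p2 p3 S'"
proof -
  have S'p: "finite S'" "S' \<noteq> {}" "S' \<subseteq> Ztil" using hex_finite[OF S'] hex_nonempty[OF S'] hex_Ztil[OF S'] by auto
  have finS'': "finite S''" "S'' \<subseteq> Ztil" using hex_finite[OF S''] hex_Ztil[OF S''] by auto
  have "\<forall>T. S' \<subseteq> T \<longrightarrow> T \<subseteq> S'' \<longrightarrow> card (T - S') = n \<longrightarrow>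
      distr (PS p1 p2 p3 T) (PiM (ES S') (\<lambda>_. nnb)) (\<lambda>\<omega>. restrict \<omega> (ES S')) = PS p1 p2 p3 S'" for n
  proof (induction n)
    case 0
    show ?case
    proof (intro allI impI)
      fix T assume T: "S' \<subseteq> T" "T \<subseteq> S''" "card (T - S') = 0"
      have "finite T" using T(2) finS''(1) finite_subset by blast
      then have "T = S'" using T by auto
      then show "distr (PS p1 p2 p3 T) (PiM (ES S') (\<lambda>_. nnb)) (\<lambda>\<omega>. restrict \<omega> (ES S')) = PS p1 p2 p3 S'"
        using PS_self[OF S'p] by simp
    qed
  next
    case (Suc n)
    show ?case
    proof (intro allI impI)
      fix T assume T: "S' \<subseteq> T" "T \<subseteq> S''" "card (T - S') = Suc n"
      have fT: "finite T" using T(2) finS''(1) finite_subset by blast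
      have TZ: "T \<subseteq> Ztil" using T(2) finS''(2) by auto
      have ne: "T - S' \<noteq> {}"
      proof
        assume e: "T - S' = {}"
        have "card (T - S') = 0" unfolding e by (rule card.empty)
        then show False using T(3) by simp
      qed
      obtain y where y: "y \<in> T - S'" "ismax (T - {y}) y \<or> ismin (T - {y}) y"
        using exists_extreme[OF S' fT T(1) TZ ne] by blast
      define T0 where "T0 = T - {y}"
      have T0: "finite T0" "T0 \<noteq> {}" "T0 \<subseteq> Ztil" using fT S'p(2) T(1) y(1) TZ unfolding T0_def by auto
      have yZ: "y \<in> Ztil" "y \<notin> T0" using y(1) TZ unfolding T0_def by auto
      have ins: "insert y T0 = T" using y(1) unfolding T0_def by auto
      have step: "distr (PS p1 p2 p3 T) (PiM (ES T0) (\<lambda>_. nnb)) (\<lambda>\<omega>. restrict \<omega> (ES T0)) = PS p1 p2 p3 T0"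
        using single_step[OF T0 yZ] y(2) ins unfolding T0_def by simp
      have IH: "distr (PS p1 p2 p3 T0) (PiM (ES S') (\<lambda>_. nnb)) (\<lambda>\<omega>. restrict \<omega> (ES S')) = PS p1 p2 p3 S'"
      proof -
        have "S' \<subseteq> T0" "T0 \<subseteq> S''" using T(1,2) y(1) unfolding T0_def by auto
        moreover have "card (T0 - S') = n"
        proof -
          have "T0 - S' = (T - S') - {y}" unfolding T0_def by auto
          then show ?thesis using T(3) y(1) fT by simp
        qed
        ultimately show ?thesis using Suc.IH by blast
      qed
      have "S' \<subseteq> T0" "T0 \<subseteq> T" using T(1) y(1) unfolding T0_def by auto
      then have "ES S' \<subseteq> ES T0" "ES T0 \<subseteq> ES T" using ES_mono by auto
      then have "distr (PS p1 p2 p3 T) (PiM (ES S') (\<lambda>_. nnb)) (\<lambda>\<omega>. restrict \<omega> (ES S'))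
          = distr (distr (PS p1 p2 p3 T) (PiM (ES T0) (\<lambda>_. nnb)) (\<lambda>\<omega>. restrict \<omega> (ES T0))) (PiM (ES S') (\<lambda>_. nnb)) (\<lambda>\<omega>. restrict \<omega> (ES S'))"
        by (intro restrict_trans_distr[symmetric]) (simp_all add: PS_eq)
      also have "\<dots> = PS p1 p2 p3 S'" unfolding step IH ..
      finally show "distr (PS p1 p2 p3 T) (PiM (ES S') (\<lambda>_. nnb)) (\<lambda>\<omega>. restrict \<omega> (ES S')) = PS p1 p2 p3 S'" .
    qed
  qed
  then show ?thesis using sub by blast
qed

end

lemma restrict_borel_meas:
  "J \<subseteq> K \<Longrightarrow> (\<lambda>\<omega>. restrict \<omega> J) \<in> measurable (PiM K (\<lambda>_. nnb)) (PiM J (\<lambda>_. borel::real measure))"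
proof (rule measurable_restrict)
  fix i assume "J \<subseteq> K" "i \<in> J"
  then have "(\<lambda>\<omega>. \<omega> i) \<in> measurable (PiM K (\<lambda>_. nnb)) nnb"
    by (intro measurable_component_singleton) auto
  then show "(\<lambda>\<omega>. \<omega> i) \<in> measurable (PiM K (\<lambda>_. nnb)) borel" by (rule meas_from_nnb[OF refl])
qed

lemma rtd2:
  assumes "J \<subseteq> K" "K \<subseteq> L" "sets N = sets (PiM L (\<lambda>_. nnb))"
  shows "distr (distr N (PiM K (\<lambda>_. nnb)) (\<lambda>\<omega>. restrict \<omega> K)) (PiM J (\<lambda>_. borel::real measure)) (\<lambda>\<omega>. restrict \<omega> J)
       = distr N (PiM J (\<lambda>_. borel)) (\<lambda>\<omega>. restrict \<omega> J)"
proof -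
  have m1: "(\<lambda>\<omega>. restrict \<omega> K) \<in> measurable N (PiM K (\<lambda>_. nnb))"
    using measurable_cong_sets[OF assms(3) refl] assms(2) by (auto intro!: measurable_restrict_subset)
  have m2: "(\<lambda>\<omega>. restrict \<omega> J) \<in> measurable (PiM K (\<lambda>_. nnb)) (PiM J (\<lambda>_. borel))"
    using assms(1) by (rule restrict_borel_meas)
  show ?thesis
    unfolding distr_distr[OF m2 m1]
    by (rule distr_cong) (use assms(1) in \<open>auto simp: fun_eq_iff\<close>)
qed

definition mJ :: "edge set \<Rightarrow> nat" where "mJ J = (LEAST m. J \<subseteq> ES (Dm m))"

lemma mJ: assumes "finite J" "J \<subseteq> Edges" shows "J \<subseteq> ES (Dm (mJ J))"
  unfolding mJ_def by (rule LeastI_ex[OF finite_in_ES_Dm[OF assms]])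

lemma mJ_mono: "finite H \<Longrightarrow> H \<subseteq> Edges \<Longrightarrow> J \<subseteq> H \<Longrightarrow> mJ J \<le> mJ H"
  unfolding mJ_def using mJ[of H] by (intro Least_le) (auto simp: mJ_def)

context hexR
begin

definition PJ :: "edge set \<Rightarrow> (edge \<Rightarrow> real) measure" where
  "PJ J = distr (PS p1 p2 p3 (Dm (mJ J))) (PiM J (\<lambda>_. borel)) (\<lambda>\<omega>. restrict \<omega> J)"

lemma Dm_props: "finite (Dm m)" "Dm m \<noteq> {}" "Dm m \<subseteq> Ztil"
  using hex_finite hex_nonempty hex_Ztil hexdom_Dm by auto

lemma PS_meas_restrict:
  assumes "J \<subseteq> ES S"
  shows "(\<lambda>\<omega>. restrict \<omega> J) \<in> measurable (PS p1 p2 p3 S) (PiM J (\<lambda>_. borel))"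
proof -
  have "measurable (PS p1 p2 p3 S) (PiM J (\<lambda>_. borel::real measure)) = measurable (PiM (ES S) (\<lambda>_. nnb)) (PiM J (\<lambda>_. borel))"
    by (rule measurable_cong_sets[OF PS_sets refl])
  then show ?thesis using restrict_borel_meas[OF assms] by simp
qed

lemma PS_Dm_marg:
  assumes "J \<subseteq> ES (Dm m)" "m \<le> n"
  shows "distr (PS p1 p2 p3 (Dm n)) (PiM J (\<lambda>_. borel)) (\<lambda>\<omega>. restrict \<omega> J)
       = distr (PS p1 p2 p3 (Dm m)) (PiM J (\<lambda>_. borel)) (\<lambda>\<omega>. restrict \<omega> J)"
proof -
  have "PS p1 p2 p3 (Dm m) = distr (PS p1 p2 p3 (Dm n)) (PiM (ES (Dm m)) (\<lambda>_. nnb)) (\<lambda>\<omega>. restrict \<omega> (ES (Dm m)))"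
    using consistent[OF hexdom_Dm hexdom_Dm Dm_mono[OF assms(2)]] by simp
  then show ?thesis
    using rtd2[OF assms(1) ES_mono[OF Dm_mono[OF assms(2)]] PS_sets] by simp
qed

lemma PJ_proj:
  assumes "J \<subseteq> H" "finite H" "H \<subseteq> Edges"
  shows "PJ J = distr (PJ H) (PiM J (\<lambda>_. borel)) (\<lambda>f. restrict f J)"
proof -
  have fJ: "finite J" "J \<subseteq> Edges" using assms finite_subset by auto
  have "distr (PJ H) (PiM J (\<lambda>_. borel)) (\<lambda>f. restrict f J)
      = distr (PS p1 p2 p3 (Dm (mJ H))) (PiM J (\<lambda>_. borel)) (\<lambda>f. restrict f J)"
  proof -
    have m1: "(\<lambda>\<omega>. restrict \<omega> H) \<in> measurable (PS p1 p2 p3 (Dm (mJ H))) (PiM H (\<lambda>_. borel))"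
      by (rule PS_meas_restrict[OF mJ[OF assms(2,3)]])
    have m2: "(\<lambda>\<omega>. restrict \<omega> J) \<in> measurable (PiM H (\<lambda>_. borel)) (PiM J (\<lambda>_. borel::real measure))"
      using assms(1) by (rule measurable_restrict_subset)
    show ?thesis unfolding PJ_def distr_distr[OF m2 m1]
      by (rule distr_cong) (use assms(1) in \<open>auto simp: fun_eq_iff\<close>)
  qed
  also have "\<dots> = PJ J" unfolding PJ_def
    by (rule PS_Dm_marg[OF mJ[OF fJ] mJ_mono[OF assms(2,3,1)]])
  finally show ?thesis by simp
qed

lemma PJ_prob: assumes "finite J" "J \<subseteq> Edges" shows "prob_space (PJ J)"
  unfolding PJ_def
  by (rule prob_space.prob_space_distr[OF PS_prob[OF Dm_props]])
     (rule PS_meas_restrict[OF mJ[OF assms]])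

lemma PS_marg_general:
  assumes S: "hexdom S" and m: "ES S \<subseteq> ES (Dm m)"
  shows "distr (PS p1 p2 p3 (Dm m)) (PiM (ES S) (\<lambda>_. nnb)) (\<lambda>\<omega>. restrict \<omega> (ES S)) = PS p1 p2 p3 S"
proof -
  obtain n0 where n0: "S \<subseteq> Dm n0" using finite_in_Dm[OF hex_finite[OF S]] hex_Ztil[OF S] by blast
  define n where "n = max n0 m"
  have Sn: "S \<subseteq> Dm n" using n0 Dm_mono[of n0 n] unfolding n_def by auto
  have mn: "Dm m \<subseteq> Dm n" using Dm_mono unfolding n_def by auto
  have "PS p1 p2 p3 (Dm m) = distr (PS p1 p2 p3 (Dm n)) (PiM (ES (Dm m)) (\<lambda>_. nnb)) (\<lambda>\<omega>. restrict \<omega> (ES (Dm m)))"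
    using consistent[OF hexdom_Dm hexdom_Dm mn] by simp
  then have "distr (PS p1 p2 p3 (Dm m)) (PiM (ES S) (\<lambda>_. nnb)) (\<lambda>\<omega>. restrict \<omega> (ES S))
      = distr (PS p1 p2 p3 (Dm n)) (PiM (ES S) (\<lambda>_. nnb)) (\<lambda>\<omega>. restrict \<omega> (ES S))"
    using restrict_trans_distr[OF m PS_sets ES_mono[OF mn]] by simp
  also have "\<dots> = PS p1 p2 p3 S" by (rule consistent[OF S hexdom_Dm Sn])
  finally show ?thesis .
qed

lemma uniqueness:
  assumes P: "prob_space P" "sets P = sets (PiM Edges (\<lambda>_. nnb))"
    "\<And>S. hexdom S \<Longrightarrow> distr P (PiM (ES S) (\<lambda>_. nnb)) (\<lambda>\<omega>. restrict \<omega> (ES S)) = PS p1 p2 p3 S"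
  assumes Q: "sets Q = sets (PiM Edges (\<lambda>_. nnb))"
    "\<And>S. hexdom S \<Longrightarrow> distr Q (PiM (ES S) (\<lambda>_. nnb)) (\<lambda>\<omega>. restrict \<omega> (ES S)) = PS p1 p2 p3 S"
  shows "P = Q"
proof (rule measure_eqI_PiM_infinite[OF P(2) Q(1)])
  show "finite_measure P" using P(1) unfolding prob_space_def by simp
  fix J A assume J: "finite J" "J \<subseteq> Edges" and A: "\<And>i. i \<in> J \<Longrightarrow> A i \<in> sets nnb"
  define K where "K = ES (Dm (mJ J))"
  have JK: "J \<subseteq> K" unfolding K_def using mJ[OF J] .
  have KE: "K \<subseteq> Edges" unfolding K_def ES_def by auto
  have X: "prod_emb K (\<lambda>_. nnb) J (Pi\<^sub>E J A) \<in> sets (PiM K (\<lambda>_. nnb))"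
    using J JK A by (intro sets_PiM_I) auto
  have e: "prod_emb Edges (\<lambda>_. nnb) J (Pi\<^sub>E J A) = prod_emb Edges (\<lambda>_. nnb) K (prod_emb K (\<lambda>_. nnb) J (Pi\<^sub>E J A))"
    using JK KE by simp
  have "emeasure P (prod_emb Edges (\<lambda>_. nnb) J (Pi\<^sub>E J A)) = emeasure (PS p1 p2 p3 (Dm (mJ J))) (prod_emb K (\<lambda>_. nnb) J (Pi\<^sub>E J A))"
    unfolding e using emeasure_distr_restrict[OF KE P(2) X] P(3)[OF hexdom_Dm] unfolding K_def by simp
  also have "\<dots> = emeasure Q (prod_emb Edges (\<lambda>_. nnb) J (Pi\<^sub>E J A))"
    unfolding e using emeasure_distr_restrict[OF KE Q(1) X] Q(2)[OF hexdom_Dm] unfolding K_def by simp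
  finally show "emeasure P (prod_emb Edges (\<lambda>_. nnb) J (Pi\<^sub>E J A)) = emeasure Q (prod_emb Edges (\<lambda>_. nnb) J (Pi\<^sub>E J A))" .
qed

end

definition clampS :: "edge set \<Rightarrow> (edge \<Rightarrow> real) \<Rightarrow> (edge \<Rightarrow> real)" where
  "clampS J \<omega> = (\<lambda>e\<in>J. max 0 (\<omega> e))"

lemma clampS_meas: "clampS J \<in> measurable (PiM J (\<lambda>_. borel)) (PiM J (\<lambda>_. nnb))"
  unfolding clampS_def
proof (rule measurable_restrict)
  fix e assume e: "e \<in> J"
  have "(\<lambda>\<omega>. \<omega> e) \<in> borel_measurable (PiM J (\<lambda>_. borel::real measure))"
    using e by (intro measurable_component_singleton) auto
  then show "(\<lambda>\<omega>. max 0 (\<omega> e)) \<in> measurable (PiM J (\<lambda>_. borel)) nnb"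
    unfolding meas_nnb_iff by (auto intro: borel_measurable_max)
qed

lemma ES_Edges: "ES S \<subseteq> Edges" unfolding ES_def by auto

context hexR
begin

lemma existence:
  "\<exists>P. prob_space P \<and> sets P = sets (PiM Edges (\<lambda>_. nnb)) \<and>
     (\<forall>S. hexdom S \<longrightarrow> distr P (PiM (ES S) (\<lambda>_. nnb)) (\<lambda>\<omega>. restrict \<omega> (ES S)) = PS p1 p2 p3 S)"
proof -
  interpret PL: polish_projective Edges PJ
    unfolding polish_projective_def projective_family_def using PJ_proj PJ_prob by blast
  have plim: "prob_space PL.lim" by (rule prob_spaceI) (use PL.P.emeasure_space_1 in simp)
  have slim: "sets PL.lim = sets (PiM Edges (\<lambda>_. borel))" by simp
  have ml: "f \<in> measurable PL.lim N" if "f \<in> measurable (PiM Edges (\<lambda>_. borel)) N" for f and N :: "'z measure"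
    using that unfolding measurable_cong_sets[OF slim refl] .
  have cm: "clampS Edges \<in> measurable PL.lim (PiM Edges (\<lambda>_. nnb))"
    by (rule ml[OF clampS_meas])
  define Q where "Q = distr PL.lim (PiM Edges (\<lambda>_. nnb)) (clampS Edges)"
  have Qp: "prob_space Q" unfolding Q_def by (rule prob_space.prob_space_distr[OF plim cm])
  have Qs: "sets Q = sets (PiM Edges (\<lambda>_. nnb))" unfolding Q_def by simp
  have marg: "distr Q (PiM (ES S) (\<lambda>_. nnb)) (\<lambda>\<omega>. restrict \<omega> (ES S)) = PS p1 p2 p3 S" if S: "hexdom S" for S
  proof -
    let ?E = "ES S"
    have fE: "finite ?E" using finite_ES[OF hex_finite[OF S]] .
    define m where "m = mJ ?E"
    have Em: "?E \<subseteq> ES (Dm m)" unfolding m_def by (rule mJ[OF fE ES_Edges])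
    have r1: "(\<lambda>\<omega>. restrict \<omega> ?E) \<in> measurable (PiM Edges (\<lambda>_. nnb)) (PiM ?E (\<lambda>_. nnb))"
      using ES_Edges by (rule measurable_restrict_subset)
    have r2: "(\<lambda>\<omega>. restrict \<omega> ?E) \<in> measurable PL.lim (PiM ?E (\<lambda>_. borel))"
      by (rule ml[OF measurable_restrict_subset[OF ES_Edges]])
    have limE: "distr PL.lim (PiM ?E (\<lambda>_. borel)) (\<lambda>\<omega>. restrict \<omega> ?E) = PJ ?E"
    proof (rule measure_eqI)
      show "sets (distr PL.lim (PiM ?E (\<lambda>_. borel)) (\<lambda>\<omega>. restrict \<omega> ?E)) = sets (PJ ?E)"
        unfolding PJ_def by simp
      fix A assume "A \<in> sets (distr PL.lim (PiM ?E (\<lambda>_. borel)) (\<lambda>\<omega>. restrict \<omega> ?E))"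
      then have A: "A \<in> sets (PiM ?E (\<lambda>_. borel))" by simp
      show "emeasure (distr PL.lim (PiM ?E (\<lambda>_. borel)) (\<lambda>\<omega>. restrict \<omega> ?E)) A = emeasure (PJ ?E) A"
        using emeasure_distr_restrict[OF ES_Edges slim A] PL.emeasure_lim_emb[OF ES_Edges fE A] by simp
    qed
    have "distr Q (PiM ?E (\<lambda>_. nnb)) (\<lambda>\<omega>. restrict \<omega> ?E)
        = distr PL.lim (PiM ?E (\<lambda>_. nnb)) ((\<lambda>\<omega>. restrict \<omega> ?E) \<circ> clampS Edges)"
      unfolding Q_def by (rule distr_distr[OF r1 cm])
    also have "\<dots> = distr PL.lim (PiM ?E (\<lambda>_. nnb)) (clampS ?E \<circ> (\<lambda>\<omega>. restrict \<omega> ?E))"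
      by (rule distr_cong) (use ES_Edges in \<open>auto simp: clampS_def fun_eq_iff\<close>)
    also have "\<dots> = distr (distr PL.lim (PiM ?E (\<lambda>_. borel)) (\<lambda>\<omega>. restrict \<omega> ?E)) (PiM ?E (\<lambda>_. nnb)) (clampS ?E)"
      by (rule distr_distr[symmetric, OF clampS_meas r2])
    also have "\<dots> = distr (distr (PS p1 p2 p3 (Dm m)) (PiM ?E (\<lambda>_. borel)) (\<lambda>\<omega>. restrict \<omega> ?E)) (PiM ?E (\<lambda>_. nnb)) (clampS ?E)"
      unfolding limE PJ_def m_def ..
    also have "\<dots> = distr (PS p1 p2 p3 (Dm m)) (PiM ?E (\<lambda>_. nnb)) (clampS ?E \<circ> (\<lambda>\<omega>. restrict \<omega> ?E))"
      by (rule distr_distr[OF clampS_meas PS_meas_restrict[OF Em]])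
    also have "\<dots> = distr (PS p1 p2 p3 (Dm m)) (PiM ?E (\<lambda>_. nnb)) (\<lambda>\<omega>. restrict \<omega> ?E)"
    proof (rule distr_cong)
      fix \<omega> assume "\<omega> \<in> space (PS p1 p2 p3 (Dm m))"
      then have "\<omega> \<in> space (PiM (ES (Dm m)) (\<lambda>_. nnb))" using PS_sets[THEN sets_eq_imp_space_eq] by simp
      then have "e \<in> ES (Dm m) \<Longrightarrow> \<omega> e \<ge> 0" for e by (auto simp: space_PiM PiE_iff space_nnb)
      then show "(clampS ?E \<circ> (\<lambda>\<omega>. restrict \<omega> ?E)) \<omega> = restrict \<omega> ?E"
        using Em by (auto simp: clampS_def fun_eq_iff)
    qed simp_all
    also have "\<dots> = PS p1 p2 p3 S" by (rule PS_marg_general[OF S Em])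
    finally show ?thesis .
  qed
  show ?thesis using Qp Qs marg by blast
qed

end

lemma shift_edge_pair: "shift_edge (a1, a2) ((t, x), (t', x')) = ((t + a1, x + a2), (t' + a1, x' + a2))"
  unfolding shift_edge_def by simp

lemma shift_pt_pair: "shift_pt (a1, a2) (t, x) = (t + a1, x + a2)"
  unfolding shift_pt_def by simp

lemma inj_shift_pt: "inj (shift_pt a)"
  unfolding shift_pt_def by (auto intro!: injI simp: prod_eq_iff)

lemma inj_shift_edge: "inj (shift_edge a)"
  unfolding shift_edge_def by (auto intro!: injI simp: prod_eq_iff)

lemma Ztil_shift: "a \<in> Ztil \<Longrightarrow> z \<in> Ztil \<longleftrightarrow> shift_pt a z \<in> Ztil"
proof -
  assume a: "a \<in> Ztil"
  obtain a1 a2 where aa: "a = (a1, a2)" by fastforce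
  obtain t x where z: "z = (t, x)" by fastforce
  have ea: "even (a1 + a2)" using a aa unfolding Ztil_def by simp
  have "even (t + a1 + (x + a2)) \<longleftrightarrow> even (t + x)" using ea by presburger
  then show ?thesis unfolding aa z shift_pt_pair Ztil_def by simp
qed

lemma Edges_shift: "a \<in> Ztil \<Longrightarrow> shift_edge a e \<in> Edges \<longleftrightarrow> e \<in> Edges"
proof -
  assume a: "a \<in> Ztil"
  obtain a1 a2 where aa: "a = (a1, a2)" by fastforce
  obtain t x t' x' where e: "e = ((t, x), (t', x'))" by (metis prod.collapse)
  have z: "(t, x) \<in> Ztil \<longleftrightarrow> (t + a1, x + a2) \<in> Ztil" using Ztil_shift[OF a, of "(t, x)"] aa shift_pt_pair by simp
  show ?thesis unfolding aa e shift_edge_pair Edges_def using z unfolding Ztil_def by auto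
qed

lemma mem_shift: "shift_pt a z \<in> shift_pt a ` S \<longleftrightarrow> z \<in> S"
  by (rule inj_image_mem_iff[OF inj_shift_pt])

lemma ES_shift: "a \<in> Ztil \<Longrightarrow> shift_edge a e \<in> ES (shift_pt a ` S) \<longleftrightarrow> e \<in> ES S"
  unfolding ES_def using Edges_shift mem_shift by (simp add: shift_edge_pt)

lemma in_edges_shift: "a \<in> Ztil \<Longrightarrow> shift_edge a e \<in> in_edges (shift_pt a ` S) \<longleftrightarrow> e \<in> in_edges S"
  unfolding in_edges_def using Edges_shift mem_shift by (simp add: shift_edge_pt)

lemma ascending_shift: "ascending (shift_edge a e) \<longleftrightarrow> ascending e"
  unfolding ascending_def shift_edge_def by auto

lemma ea_shift: "ea (shift_pt a y) = shift_edge a (ea y)" "ed (shift_pt a y) = shift_edge a (ed y)"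
  unfolding ea_def ed_def shift_edge_def shift_pt_def by simp_all

lemma flow_shift:
  assumes S: "finite S" "S \<noteq> {}" "S \<subseteq> Ztil" and a: "a \<in> Ztil" and e: "e \<in> ES S"
  shows "flow (shift_pt a ` S) inp xi (shift_edge a e) = flow S (\<lambda>e. inp (shift_edge a e)) (\<lambda>z. xi (shift_pt a z)) e"
proof -
  let ?Sa = "shift_pt a ` S"
  obtain a1 a2 where aa: "a = (a1, a2)" by fastforce
  have Sa: "finite ?Sa" "?Sa \<noteq> {}" "?Sa \<subseteq> Ztil" using S Ztil_shift[OF a] by auto
  have step: "flow ?Sa inp xi (shift_edge a ((t, x), (t', x'))) = flow S (\<lambda>e. inp (shift_edge a e)) (\<lambda>z. xi (shift_pt a z)) ((t, x), (t', x'))"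
    if 1: "((t, x), (t', x')) \<in> ES S"
      "(t, x) \<in> S \<Longrightarrow> flow ?Sa inp xi (shift_edge a (ea (t, x))) = flow S (\<lambda>e. inp (shift_edge a e)) (\<lambda>z. xi (shift_pt a z)) (ea (t, x))
         \<and> flow ?Sa inp xi (shift_edge a (ed (t, x))) = flow S (\<lambda>e. inp (shift_edge a e)) (\<lambda>z. xi (shift_pt a z)) (ed (t, x))"
    for t x t' x'
  proof -
    have sh: "shift_edge a ((t, x), (t', x')) = ((t + a1, x + a2), (t' + a1, x' + a2))" unfolding aa shift_edge_pair ..
    have sp: "shift_pt a (t, x) = (t + a1, x + a2)" unfolding aa shift_pt_pair ..
    have mem: "(t + a1, x + a2) \<in> ?Sa \<longleftrightarrow> (t, x) \<in> S" using mem_shift[of a "(t, x)" S] sp by simp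
    have eas: "ea (t + a1, x + a2) = shift_edge a (ea (t, x))" "ed (t + a1, x + a2) = shift_edge a (ed (t, x))"
      using ea_shift[of a "(t, x)"] sp by simp_all
    show ?thesis
    proof (cases "(t, x) \<in> S")
      case True
      show ?thesis unfolding sh
        unfolding flow_eqn[OF Sa(1,2), of inp xi "t + a1" "x + a2" "t' + a1" "x' + a2"]
          flow_eqn[OF S(1,2), of _ _ t x t' x']
        using True mem eas 1(2)[OF True] sp by simp
    next
      case False
      show ?thesis unfolding sh
        unfolding flow_eqn[OF Sa(1,2), of inp xi "t + a1" "x + a2" "t' + a1" "x' + a2"]
          flow_eqn[OF S(1,2), of _ _ t x t' x']
        using False mem sh by simp
    qed
  qed
  show ?thesis
    apply (rule flow_induct[OF S, where P="\<lambda>e. flow ?Sa inp xi (shift_edge a e) = flow S (\<lambda>e. inp (shift_edge a e)) (\<lambda>z. xi (shift_pt a z)) e", OF _ e])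
    apply (rule step)
     apply assumption
    apply assumption
    done
qed

context hexR
begin

definition shIdx :: "pt \<Rightarrow> edge + pt \<Rightarrow> edge + pt" where
  "shIdx a = map_sum (shift_edge a) (shift_pt a)"

lemma PS_shift:
  assumes S: "finite S" "S \<noteq> {}" "S \<subseteq> Ztil" and a: "a \<in> Ztil"
  shows "distr (PS p1 p2 p3 (shift_pt a ` S)) (PiM (ES S) (\<lambda>_. nnb)) (\<lambda>\<omega>. \<lambda>e\<in>ES S. \<omega> (shift_edge a e)) = PS p1 p2 p3 S"
proof -
  let ?Sa = "shift_pt a ` S"
  have Sa: "finite ?Sa" "?Sa \<noteq> {}" "?Sa \<subseteq> Ztil" using S Ztil_shift[OF a] by auto
  define rx where "rx \<omega> = (\<lambda>n\<in>Idx S. \<omega> (shIdx a n))" for \<omega> :: "edge + pt \<Rightarrow> real"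
  have Msh: "M (shIdx a i) = M i" for i
    unfolding shIdx_def Mn_def by (cases i) (simp_all add: ascending_shift)
  have shin: "shIdx a \<in> Idx S \<rightarrow> Idx ?Sa"
    unfolding shIdx_def Idx_def using in_edges_shift[OF a] by auto
  have shinj: "inj_on (shIdx a) (Idx S)"
  proof (rule inj_onI)
    fix i j assume "shIdx a i = shIdx a j"
    moreover have "shift_edge a x = shift_edge a y \<longleftrightarrow> x = y" for x y using inj_shift_edge by (simp add: inj_eq)
    moreover have "shift_pt a x = shift_pt a y \<longleftrightarrow> x = y" for x y using inj_shift_pt by (simp add: inj_eq)
    ultimately show "i = j" unfolding shIdx_def by (cases i; cases j) auto
  qed
  have reidx: "distr (PiM (Idx ?Sa) M) (PiM (Idx S) M) rx = PiM (Idx S) M"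
  proof -
    have "distr (PiM (Idx ?Sa) M) (PiM (Idx S) (\<lambda>i. M (shIdx a i))) rx = PiM (Idx S) (\<lambda>i. M (shIdx a i))"
      unfolding rx_def by (rule distr_PiM_reindex[OF M_prob shinj shin])
    then show ?thesis unfolding Msh .
  qed
  have rxm: "rx \<in> measurable (PiM (Idx ?Sa) M) (PiM (Idx S) M)"
    unfolding rx_def
  proof (rule measurable_restrict)
    fix n assume "n \<in> Idx S"
    then have "shIdx a n \<in> Idx ?Sa" using shin by auto
    then have "(\<lambda>\<omega>. \<omega> (shIdx a n)) \<in> measurable (PiM (Idx ?Sa) M) (M (shIdx a n))" by simp
    then show "(\<lambda>\<omega>. \<omega> (shIdx a n)) \<in> measurable (PiM (Idx ?Sa) M) (M n)" unfolding Msh .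
  qed
  have shm: "(\<lambda>\<omega>. \<lambda>e\<in>ES S. \<omega> (shift_edge a e)) \<in> measurable (PiM (ES ?Sa) (\<lambda>_. nnb)) (PiM (ES S) (\<lambda>_. nnb))"
  proof (rule measurable_restrict)
    fix e assume "e \<in> ES S"
    then have "shift_edge a e \<in> ES ?Sa" using ES_shift[OF a] by simp
    then show "(\<lambda>\<omega>. \<omega> (shift_edge a e)) \<in> measurable (PiM (ES ?Sa) (\<lambda>_. nnb)) nnb" by simp
  qed
  have pw: "(\<lambda>e\<in>ES S. FF ?Sa \<omega> (shift_edge a e)) = FF S (rx \<omega>)" for \<omega>
  proof (rule ext)
    fix e
    show "(\<lambda>e\<in>ES S. FF ?Sa \<omega> (shift_edge a e)) e = FF S (rx \<omega>) e"
    proof (cases "e \<in> ES S")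
      case True
      have "FF ?Sa \<omega> (shift_edge a e) = flow ?Sa (\<lambda>e. \<omega> (Inl e)) (\<lambda>y. \<omega> (Inr y)) (shift_edge a e)"
        unfolding FF_def using True ES_shift[OF a] by simp
      also have "\<dots> = flow S (\<lambda>e. \<omega> (Inl (shift_edge a e))) (\<lambda>z. \<omega> (Inr (shift_pt a z))) e"
        by (rule flow_shift[OF S a True])
      also have "\<dots> = flow S (\<lambda>e. rx \<omega> (Inl e)) (\<lambda>z. rx \<omega> (Inr z)) e"
        by (rule flow_cong[OF S _ _ True]) (auto simp: rx_def Idx_def shIdx_def)
      finally show ?thesis using True unfolding FF_def by simp
    qed (simp add: FF_def)
  qed
  have "distr (PS p1 p2 p3 ?Sa) (PiM (ES S) (\<lambda>_. nnb)) (\<lambda>\<omega>. \<lambda>e\<in>ES S. \<omega> (shift_edge a e))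
      = distr (PiM (Idx ?Sa) M) (PiM (ES S) (\<lambda>_. nnb)) ((\<lambda>\<omega>. \<lambda>e\<in>ES S. \<omega> (shift_edge a e)) \<circ> FF ?Sa)"
    unfolding PS_eq noise_eq by (rule distr_distr[OF shm FF_meas[OF Sa]])
  also have "\<dots> = distr (PiM (Idx ?Sa) M) (PiM (ES S) (\<lambda>_. nnb)) (FF S \<circ> rx)"
    by (rule distr_cong) (simp_all add: pw)
  also have "\<dots> = distr (distr (PiM (Idx ?Sa) M) (PiM (Idx S) M) rx) (PiM (ES S) (\<lambda>_. nnb)) (FF S)"
    by (rule distr_distr[symmetric, OF FF_meas[OF S] rxm])
  also have "\<dots> = PS p1 p2 p3 S" unfolding reidx PS_eq noise_eq ..
  finally show ?thesis .
qed

end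

lemma shm_meas:
  assumes a: "a \<in> Ztil"
  shows "(\<lambda>\<omega>. \<lambda>e\<in>ES S. \<omega> (shift_edge a e)) \<in> measurable (PiM (ES (shift_pt a ` S)) (\<lambda>_. nnb)) (PiM (ES S) (\<lambda>_. nnb))"
proof (rule measurable_restrict)
  fix e assume "e \<in> ES S"
  then have "shift_edge a e \<in> ES (shift_pt a ` S)" using ES_shift[OF a] by simp
  then show "(\<lambda>\<omega>. \<omega> (shift_edge a e)) \<in> measurable (PiM (ES (shift_pt a ` S)) (\<lambda>_. nnb)) nnb" by simp
qed

lemma ShE_meas:
  assumes a: "a \<in> Ztil"
  shows "(\<lambda>\<omega>. \<lambda>e\<in>Edges. \<omega> (shift_edge a e)) \<in> measurable (PiM Edges (\<lambda>_. nnb)) (PiM Edges (\<lambda>_. nnb))"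
proof (rule measurable_restrict)
  fix e assume "e \<in> Edges"
  then have "shift_edge a e \<in> Edges" using Edges_shift[OF a] by simp
  then show "(\<lambda>\<omega>. \<omega> (shift_edge a e)) \<in> measurable (PiM Edges (\<lambda>_. nnb)) nnb" by simp
qed

context hexR
begin

lemma invariance:
  assumes P: "prob_space P" "sets P = sets (PiM Edges (\<lambda>_. nnb))"
    "\<And>S. hexdom S \<Longrightarrow> distr P (PiM (ES S) (\<lambda>_. nnb)) (\<lambda>\<omega>. restrict \<omega> (ES S)) = PS p1 p2 p3 S"
    and a: "a \<in> Ztil"
  shows "distr P (PiM Edges (\<lambda>_. nnb)) (\<lambda>\<omega>. \<lambda>e\<in>Edges. \<omega> (shift_edge a e)) = P"
proof -
  define Q where "Q = distr P (PiM Edges (\<lambda>_. nnb)) (\<lambda>\<omega>. \<lambda>e\<in>Edges. \<omega> (shift_edge a e))"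
  have mP: "f \<in> measurable P N" if "f \<in> measurable (PiM Edges (\<lambda>_. nnb)) N" for f and N :: "'z measure"
    using that unfolding measurable_cong_sets[OF P(2) refl] .
  have Qs: "sets Q = sets (PiM Edges (\<lambda>_. nnb))" unfolding Q_def by simp
  have Qm: "distr Q (PiM (ES S) (\<lambda>_. nnb)) (\<lambda>\<omega>. restrict \<omega> (ES S)) = PS p1 p2 p3 S" if S: "hexdom S" for S
  proof -
    let ?Sa = "shift_pt a ` S"
    have Sa: "hexdom ?Sa" by (rule hexdom_shift[OF S a])
    have Sp: "finite S" "S \<noteq> {}" "S \<subseteq> Ztil" using hex_finite[OF S] hex_nonempty[OF S] hex_Ztil[OF S] by auto
    have "distr Q (PiM (ES S) (\<lambda>_. nnb)) (\<lambda>\<omega>. restrict \<omega> (ES S))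
        = distr P (PiM (ES S) (\<lambda>_. nnb)) ((\<lambda>\<omega>. restrict \<omega> (ES S)) \<circ> (\<lambda>\<omega>. \<lambda>e\<in>Edges. \<omega> (shift_edge a e)))"
      unfolding Q_def by (rule distr_distr[OF measurable_restrict_subset[OF ES_Edges] mP[OF ShE_meas[OF a]]])
    also have "\<dots> = distr P (PiM (ES S) (\<lambda>_. nnb)) ((\<lambda>\<omega>. \<lambda>e\<in>ES S. \<omega> (shift_edge a e)) \<circ> (\<lambda>\<omega>. restrict \<omega> (ES ?Sa)))"
    proof (rule distr_cong)
      fix \<omega>
      have "e \<in> ES S \<Longrightarrow> shift_edge a e \<in> ES ?Sa" for e using ES_shift[OF a] by simp
      moreover have "e \<in> ES S \<Longrightarrow> e \<in> Edges" for e using ES_Edges by blast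
      ultimately show "((\<lambda>\<omega>. restrict \<omega> (ES S)) \<circ> (\<lambda>\<omega>. \<lambda>e\<in>Edges. \<omega> (shift_edge a e))) \<omega>
          = ((\<lambda>\<omega>. \<lambda>e\<in>ES S. \<omega> (shift_edge a e)) \<circ> (\<lambda>\<omega>. restrict \<omega> (ES ?Sa))) \<omega>"
        by (auto simp: fun_eq_iff)
    qed simp_all
    also have "\<dots> = distr (distr P (PiM (ES ?Sa) (\<lambda>_. nnb)) (\<lambda>\<omega>. restrict \<omega> (ES ?Sa))) (PiM (ES S) (\<lambda>_. nnb)) (\<lambda>\<omega>. \<lambda>e\<in>ES S. \<omega> (shift_edge a e))"
      by (rule distr_distr[symmetric, OF shm_meas[OF a] mP[OF measurable_restrict_subset[OF ES_Edges]]])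
    also have "\<dots> = PS p1 p2 p3 S" unfolding P(3)[OF Sa] by (rule PS_shift[OF Sp a])
    finally show ?thesis .
  qed
  have "P = Q" by (rule uniqueness[OF P Qs Qm])
  then show ?thesis unfolding Q_def by simp
qed

end

theorem mainTheorem2:
  fixes p1 p2 p3 :: "real measure"
  assumes "prob_space p1" "prob_space p2" "prob_space p3"
    and "sets p1 = sets nnb" "sets p2 = sets nnb" "sets p3 = sets nnb"
    and "distr (p1 \<Otimes>\<^sub>M (p2 \<Otimes>\<^sub>M p3)) (p1 \<Otimes>\<^sub>M (p2 \<Otimes>\<^sub>M p3)) R3 = p1 \<Otimes>\<^sub>M (p2 \<Otimes>\<^sub>M p3)"
  shows "(\<forall>S' S''. hexdom S' \<longrightarrow> hexdom S'' \<longrightarrow> S' \<subseteq> S'' \<longrightarrow>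
            distr (PS p1 p2 p3 S'') (PiM (ES S') (\<lambda>_. nnb)) (\<lambda>\<omega>. restrict \<omega> (ES S')) = PS p1 p2 p3 S')
       \<and> (\<exists>!P. prob_space P \<and> sets P = sets (PiM Edges (\<lambda>_. nnb)) \<and>
            (\<forall>S. hexdom S \<longrightarrow> distr P (PiM (ES S) (\<lambda>_. nnb)) (\<lambda>\<omega>. restrict \<omega> (ES S)) = PS p1 p2 p3 S))
       \<and> (\<forall>P. prob_space P \<and> sets P = sets (PiM Edges (\<lambda>_. nnb)) \<and>
            (\<forall>S. hexdom S \<longrightarrow> distr P (PiM (ES S) (\<lambda>_. nnb)) (\<lambda>\<omega>. restrict \<omega> (ES S)) = PS p1 p2 p3 S)
          \<longrightarrow> (\<forall>a\<in>Ztil. distr P (PiM Edges (\<lambda>_. nnb)) (\<lambda>\<omega>. \<lambda>e\<in>Edges. \<omega> (shift_edge a e)) = P))"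
proof -
  interpret hexR p1 p2 p3
    by (simp add: hexR_def hexsetup_def hexR_axioms_def assms)
  have A: "\<forall>S' S''. hexdom S' \<longrightarrow> hexdom S'' \<longrightarrow> S' \<subseteq> S'' \<longrightarrow>
            distr (PS p1 p2 p3 S'') (PiM (ES S') (\<lambda>_. nnb)) (\<lambda>\<omega>. restrict \<omega> (ES S')) = PS p1 p2 p3 S'"
    using consistent by blast
  obtain P where P: "prob_space P" "sets P = sets (PiM Edges (\<lambda>_. nnb))"
    "\<forall>S. hexdom S \<longrightarrow> distr P (PiM (ES S) (\<lambda>_. nnb)) (\<lambda>\<omega>. restrict \<omega> (ES S)) = PS p1 p2 p3 S"
    using existence by blast
  have B: "\<exists>!P. prob_space P \<and> sets P = sets (PiM Edges (\<lambda>_. nnb)) \<and>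
            (\<forall>S. hexdom S \<longrightarrow> distr P (PiM (ES S) (\<lambda>_. nnb)) (\<lambda>\<omega>. restrict \<omega> (ES S)) = PS p1 p2 p3 S)"
  proof (rule ex1I[of _ P])
    show "prob_space P \<and> sets P = sets (PiM Edges (\<lambda>_. nnb)) \<and>
          (\<forall>S. hexdom S \<longrightarrow> distr P (PiM (ES S) (\<lambda>_. nnb)) (\<lambda>\<omega>. restrict \<omega> (ES S)) = PS p1 p2 p3 S)"
      using P by blast
    fix Q assume Q: "prob_space Q \<and> sets Q = sets (PiM Edges (\<lambda>_. nnb)) \<and>
          (\<forall>S. hexdom S \<longrightarrow> distr Q (PiM (ES S) (\<lambda>_. nnb)) (\<lambda>\<omega>. restrict \<omega> (ES S)) = PS p1 p2 p3 S)"
    show "Q = P"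
      by (rule uniqueness) (use Q P in auto)
  qed
  have C: "\<forall>P. prob_space P \<and> sets P = sets (PiM Edges (\<lambda>_. nnb)) \<and>
            (\<forall>S. hexdom S \<longrightarrow> distr P (PiM (ES S) (\<lambda>_. nnb)) (\<lambda>\<omega>. restrict \<omega> (ES S)) = PS p1 p2 p3 S)
          \<longrightarrow> (\<forall>a\<in>Ztil. distr P (PiM Edges (\<lambda>_. nnb)) (\<lambda>\<omega>. \<lambda>e\<in>Edges. \<omega> (shift_edge a e)) = P)"
  proof (intro allI impI ballI)
    fix P a assume P: "prob_space P \<and> sets P = sets (PiM Edges (\<lambda>_. nnb)) \<and>
            (\<forall>S. hexdom S \<longrightarrow> distr P (PiM (ES S) (\<lambda>_. nnb)) (\<lambda>\<omega>. restrict \<omega> (ES S)) = PS p1 p2 p3 S)"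
      and a: "a \<in> Ztil"
    show "distr P (PiM Edges (\<lambda>_. nnb)) (\<lambda>\<omega>. \<lambda>e\<in>Edges. \<omega> (shift_edge a e)) = P"
      by (rule invariance) (use P a in auto)
  qed
  show ?thesis using A B C by blast
qed

end
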